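(* Fix an integer $k\ge3$. If $\mathrm{ex}(n,2k)\in\Omega(n^{c})$ for some constant $c>1$, then the approximation ratio of $k$-Opt for \textsc{Metric TSP} satisfies $\alpha_k(n)\in\Omega(n^{1-\frac1c})$.
   Context: A \textsc{Metric TSP} instance on $n$ vertices is the complete graph $K_n$ with edge costs $c:E(K_n)\to\mathbb{R}_{\ge0}$ satisfying the triangle inequality. A tour is a Hamiltonian cycle, with length $c(T)=\sum_{e\in T}c(e)$; $\mathrm{OPT}(I)$ is the minimum tour length. A $k$-move replaces at most $k$ edges of a tour by other edges so that the result is again a tour; it is improving if the new tour is strictly shorter. A tour is $k$-optimal if no improving $k$-move exists. $\alpha_k(n)$ is the supremum of $c(T)/\mathrm{OPT}(I)$ over all \textsc{Metric TSP} instances $I$ on $n$ vertices with $\mathrm{OPT}(I)>0$ and all $k$-optimal tours $T$ of $I$. The girth of a graph is the length of its shortest cycle ($\infty$ if none). $\mathrm{ex}(n,2k)$ is the maximum number of edges of a simple graph on $n$ vertices with girth at least $2k$. *)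

theory Defs
  imports Complex_Main "HOL-Library.Landau_Symbols" "HOL-Library.Extended_Nat"
begin

text \<open>Vertices of K_n are 0..<n; edges are 2-element subsets. A cost function
  assigns a real to each edge (unordered pair), so symmetry is built in.\<close>

definition metric_instance :: "nat \<Rightarrow> (nat set \<Rightarrow> real) \<Rightarrow> bool" where
  "metric_instance n w \<longleftrightarrow>
     (\<forall>u v. u < n \<longrightarrow> v < n \<longrightarrow> u \<noteq> v \<longrightarrow> 0 \<le> w {u, v}) \<and>
     (\<forall>u v x. u < n \<longrightarrow> v < n \<longrightarrow> x < n \<longrightarrow> u \<noteq> v \<longrightarrow> u \<noteq> x \<longrightarrow> v \<noteq> x \<longrightarrow>
        w {u, v} \<le> w {u, x} + w {x, v})"

definition is_tour :: "nat \<Rightarrow> nat set set \<Rightarrow> bool" where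
  "is_tour n T \<longleftrightarrow> 3 \<le> n \<and>
     (\<exists>\<sigma>. bij_betw \<sigma> {0..<n} {0..<n} \<and> T = {{\<sigma> i, \<sigma> (Suc i mod n)} | i. i < n})"

definition tour_cost :: "(nat set \<Rightarrow> real) \<Rightarrow> nat set set \<Rightarrow> real" where
  "tour_cost w T = (\<Sum>e\<in>T. w e)"

definition OPT :: "nat \<Rightarrow> (nat set \<Rightarrow> real) \<Rightarrow> real" where
  "OPT n w = Inf {tour_cost w T | T. is_tour n T}"

definition k_move :: "nat \<Rightarrow> nat \<Rightarrow> nat set set \<Rightarrow> nat set set \<Rightarrow> bool" where
  "k_move k n T T' \<longleftrightarrow> is_tour n T \<and> is_tour n T' \<and> card (T - T') \<le> k"

definition k_optimal :: "nat \<Rightarrow> nat \<Rightarrow> (nat set \<Rightarrow> real) \<Rightarrow> nat set set \<Rightarrow> bool" where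
  "k_optimal k n w T \<longleftrightarrow> is_tour n T \<and>
     \<not> (\<exists>T'. k_move k n T T' \<and> tour_cost w T' < tour_cost w T)"

definition alpha :: "nat \<Rightarrow> nat \<Rightarrow> real" where
  "alpha k n = Sup {tour_cost w T / OPT n w | w T.
       metric_instance n w \<and> OPT n w > 0 \<and> k_optimal k n w T}"

definition simple_graph :: "nat \<Rightarrow> nat set set \<Rightarrow> bool" where
  "simple_graph n E \<longleftrightarrow> (\<forall>e\<in>E. card e = 2 \<and> e \<subseteq> {0..<n})"

definition has_cycle_of_length :: "nat set set \<Rightarrow> nat \<Rightarrow> bool" where
  "has_cycle_of_length E l \<longleftrightarrow> 3 \<le> l \<and>
     (\<exists>v :: nat \<Rightarrow> nat. inj_on v {0..<l} \<and> (\<forall>i<l. {v i, v (Suc i mod l)} \<in> E))"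

definition girth :: "nat set set \<Rightarrow> enat" where
  "girth E = (INF l \<in> {l. has_cycle_of_length E l}. enat l)"

definition ex :: "nat \<Rightarrow> nat \<Rightarrow> nat" where
  "ex n g = Max {card E | E. simple_graph n E \<and> enat g \<le> girth E}"

end

theory Submission
  imports Defs "HOL-Library.Multiset"
begin

fun pedges :: "'a list \<Rightarrow> 'a set list" where
  "pedges (x # y # zs) = {x, y} # pedges (y # zs)"
| "pedges _ = []"

definition deg :: "'a set set \<Rightarrow> 'a \<Rightarrow> nat" where
  "deg F v = card {e\<in>F. v \<in> e}"

lemma suc_mod_cases: "i < l \<Longrightarrow> Suc i mod l = (if Suc i = l then 0 else Suc i)"
  by auto

lemma cyc_edge_inj:
  assumes inj: "inj_on f {0..<l}" and l: "3 \<le> l" and i: "i < l" and j: "j < l"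
    and eq: "{f i, f (Suc i mod l)} = {f j, f (Suc j mod l)}"
  shows "i = j"
proof -
  have si: "Suc i mod l < l" and sj: "Suc j mod l < l" using i j by auto
  from eq consider "f i = f j \<and> f (Suc i mod l) = f (Suc j mod l)"
    | "f i = f (Suc j mod l) \<and> f (Suc i mod l) = f j"
    by (auto simp: doubleton_eq_iff)
  then show ?thesis
  proof cases
    case 1 then show ?thesis using inj i j by (auto dest: inj_onD)
  next
    case 2
    then have a: "i = Suc j mod l" and b: "Suc i mod l = j"
      using inj i j si sj by (auto dest: inj_onD)
    show ?thesis using a b i j l by (auto simp: suc_mod_cases split: if_splits)
  qed
qed

lemma card_cyc_edges:
  assumes inj: "inj_on f {0..<l}" and l: "3 \<le> l"
  shows "card ((\<lambda>i. {f i, f (Suc i mod l)}) ` {0..<l}) = l"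
proof -
  have "inj_on (\<lambda>i. {f i, f (Suc i mod l)}) {0..<l}"
    by (rule inj_onI) (use cyc_edge_inj[OF inj l] in auto)
  then show ?thesis by (simp add: card_image)
qed

lemma pedges_append:
  "xs \<noteq> [] \<Longrightarrow> pedges (xs @ ys) = pedges xs @ pedges (last xs # ys)"
proof (induction xs rule: pedges.induct)
  case (1 x y zs) then show ?case by simp
next
  case ("2_1") then show ?case by simp
next
  case ("2_2" x) then show ?case by (cases ys) auto
qed

lemma length_pedges: "length (pedges xs) = length xs - 1"
  by (induction xs rule: pedges.induct) auto

lemma pedges_nth: "Suc i < length xs \<Longrightarrow> pedges xs ! i = {xs ! i, xs ! Suc i}"
proof (induction xs arbitrary: i rule: pedges.induct)
  case (1 x y zs) then show ?case by (cases i) auto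
qed auto

lemma set_pedges: "set (pedges xs) = {{xs ! i, xs ! Suc i} | i. Suc i < length xs}"
proof -
  have "set (pedges xs) = {pedges xs ! i | i. i < length (pedges xs)}"
    by (simp add: set_conv_nth)
  also have "\<dots> = {{xs ! i, xs ! Suc i} | i. Suc i < length xs}"
  proof (intro equalityI subsetI)
    fix e assume "e \<in> {pedges xs ! i | i. i < length (pedges xs)}"
    then obtain i where "i < length (pedges xs)" "e = pedges xs ! i" by auto
    then show "e \<in> {{xs ! i, xs ! Suc i} | i. Suc i < length xs}"
      by (auto simp: length_pedges pedges_nth)
  next
    fix e assume "e \<in> {{xs ! i, xs ! Suc i} | i. Suc i < length xs}"
    then obtain i where "Suc i < length xs" "e = {xs ! i, xs ! Suc i}" by auto
    then show "e \<in> {pedges xs ! i | i. i < length (pedges xs)}"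
      by (auto simp: length_pedges pedges_nth intro!: exI[of _ i])
  qed
  finally show ?thesis .
qed

definition gpath :: "'a set set \<Rightarrow> 'a list \<Rightarrow> bool" where
  "gpath F xs \<longleftrightarrow> distinct xs \<and> set (pedges xs) \<subseteq> F"

lemma set_sub_pedges: "2 \<le> length xs \<Longrightarrow> set xs \<subseteq> \<Union>(set (pedges xs))"
proof (induction xs rule: pedges.induct)
  case (1 x y zs) then show ?case by (cases zs) auto
qed auto

lemma card2_obtain: "card e = 2 \<Longrightarrow> u \<in> e \<Longrightarrow> \<exists>w. w \<noteq> u \<and> e = {u, w}"
  by (metis card_2_iff insert_commute insert_iff singletonD)

lemma cycle_exists:
  assumes fin: "finite F" and ne: "F \<noteq> {}" and two: "\<forall>e\<in>F. card e = 2"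
    and nd: "\<forall>v. deg F v \<noteq> 1"
  shows "\<exists>l. has_cycle_of_length F l \<and> l \<le> card F"
proof -
  have finU: "finite (\<Union>F)" using fin two by (intro finite_Union) (auto intro: card_ge_0_finite)
  obtain e where e: "e \<in> F" using ne by auto
  then obtain a b where ab: "e = {a,b}" "a \<noteq> b" using two card_2_iff by metis
  define S where "S = {xs. gpath F xs \<and> 2 \<le> length xs}"
  have abS: "[a,b] \<in> S" using ab e by (auto simp: S_def gpath_def)
  have bound: "length xs < Suc (card (\<Union>F))" if "xs \<in> S" for xs
  proof -
    have "set xs \<subseteq> \<Union>F" using that set_sub_pedges[of xs] by (auto simp: S_def gpath_def)
    then have "card (set xs) \<le> card (\<Union>F)" using finU by (simp add: card_mono)
    then show ?thesis using that by (auto simp: S_def gpath_def distinct_card)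
  qed
  obtain xs where xsS: "xs \<in> S" and mx: "\<And>ys. ys \<in> S \<Longrightarrow> length ys \<le> length xs"
    using ex_has_greatest_nat[of "\<lambda>xs. xs \<in> S" "[a,b]" length "Suc (card (\<Union>F))"] abS bound
    by blast
  define len where "len = length xs"
  have len2: "2 \<le> len" and dxs: "distinct xs" and pxs: "set (pedges xs) \<subseteq> F"
    using xsS by (auto simp: S_def gpath_def len_def)
  define u where "u = xs ! (len - 1)"
  define p where "p = xs ! (len - 2)"
  have pu: "{p, u} \<in> F"
  proof -
    have "{xs ! (len-2), xs ! Suc (len-2)} \<in> set (pedges xs)" unfolding set_pedges
      using len2 len_def by auto
    moreover have "Suc (len - 2) = len - 1" using len2 by simp
    ultimately have "{p, u} \<in> set (pedges xs)" by (simp add: p_def u_def)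
    then show ?thesis using pxs by auto
  qed
  have "deg F u \<ge> 1"
  proof -
    have "{p,u} \<in> {e\<in>F. u \<in> e}" using pu by auto
    moreover have "finite {e\<in>F. u \<in> e}" using fin by auto
    ultimately have "card {e\<in>F. u \<in> e} > 0" by (auto simp: card_gt_0_iff)
    then show ?thesis unfolding deg_def by simp
  qed
  then have "deg F u \<ge> 2" using nd[rule_format, of u] by linarith
  have "\<exists>e'\<in>F. u \<in> e' \<and> e' \<noteq> {p,u}"
  proof (rule ccontr)
    assume "\<not> ?thesis"
    then have "{e\<in>F. u \<in> e} \<subseteq> {{p,u}}" by auto
    then have "card {e\<in>F. u \<in> e} \<le> card {{p,u}}" by (intro card_mono) auto
    then show False using \<open>deg F u \<ge> 2\<close> by (simp add: deg_def)
  qed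
  then obtain e' where e': "e' \<in> F" "u \<in> e'" "e' \<noteq> {p,u}" by auto
  then obtain w where w: "w \<noteq> u" "e' = {u, w}" using two card2_obtain by metis
  have wp: "w \<noteq> p" using w e' by (auto simp: insert_commute)
  have xs_ne: "xs \<noteq> []" using len2 len_def by auto
  have last_u: "last xs = u" using xs_ne by (simp add: u_def len_def last_conv_nth)
  have "w \<in> set xs"
  proof (rule ccontr)
    assume nw: "w \<notin> set xs"
    have "pedges (xs @ [w]) = pedges xs @ [{u, w}]"
      using pedges_append[OF xs_ne, of "[w]"] last_u by simp
    then have "xs @ [w] \<in> S" using xsS nw e' w by (auto simp: S_def gpath_def)
    then show False using mx[of "xs @ [w]"] by simp
  qed
  then obtain j where j: "j < len" "xs ! j = w" by (auto simp: in_set_conv_nth len_def)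
  have "j \<noteq> len - 1" using j w u_def by auto
  moreover have "j \<noteq> len - 2" using j wp p_def by auto
  ultimately have j3: "j + 3 \<le> len" using j by linarith
  define l where "l = len - j"
  define v where "v = (\<lambda>i. xs ! (j + i))"
  have l3: "3 \<le> l" using j3 l_def by simp
  have injv: "inj_on v {0..<l}"
    using dxs by (auto simp: inj_on_def v_def l_def len_def nth_eq_iff_index_eq)
  have edges: "{v i, v (Suc i mod l)} \<in> F" if "i < l" for i
  proof (cases "Suc i = l")
    case True
    then have ji: "j + i = len - 1" "Suc i mod l = 0" using j l_def by auto
    then have "v i = u" "v (Suc i mod l) = w" using j by (auto simp: v_def u_def)
    then show ?thesis using e' w by auto
  next
    case False
    then have "Suc i < l" using that by simp
    then have "{v i, v (Suc i mod l)} \<in> set (pedges xs)"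
      unfolding set_pedges v_def l_def len_def using j by (auto intro!: exI[of _ "j + i"] simp: len_def l_def)
    then show ?thesis using pxs by auto
  qed
  have hc: "has_cycle_of_length F l"
    unfolding has_cycle_of_length_def using l3 injv edges by blast
  have "(\<lambda>i. {v i, v (Suc i mod l)}) ` {0..<l} \<subseteq> F" using edges by auto
  then have "card ((\<lambda>i. {v i, v (Suc i mod l)}) ` {0..<l}) \<le> card F" using fin by (simp add: card_mono)
  then have "l \<le> card F" using card_cyc_edges[OF injv l3] by simp
  then show ?thesis using hc by blast
qed

definition ctrail :: "'a set set \<Rightarrow> 'a list \<Rightarrow> bool" where
  "ctrail E ws \<longleftrightarrow> 2 \<le> length ws \<and> hd ws = last ws \<and> distinct (pedges ws) \<and> set (pedges ws) \<subseteq> E"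

lemma ctrail_mono: "ctrail E ws \<Longrightarrow> E \<subseteq> E' \<Longrightarrow> ctrail E' ws"
  by (auto simp: ctrail_def)

lemma cycle_ctrail:
  assumes "has_cycle_of_length F l"
  shows "\<exists>ws. ctrail F ws \<and> length (pedges ws) = l \<and> set ws \<noteq> {}"
proof -
  from assms obtain v where l3: "3 \<le> l" and inj: "inj_on v {0..<l}"
    and ed: "\<forall>i<l. {v i, v (Suc i mod l)} \<in> F"
    unfolding has_cycle_of_length_def by blast
  define ws where "ws = map (\<lambda>i. v (i mod l)) [0..<Suc l]"
  have len: "length ws = Suc l" by (simp add: ws_def)
  have nth: "Suc i < length ws \<Longrightarrow> {ws ! i, ws ! Suc i} = {v i, v (Suc i mod l)}" for i
    by (simp add: ws_def len nth_append del: upt_Suc)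
  have sp: "set (pedges ws) = (\<lambda>i. {v i, v (Suc i mod l)}) ` {0..<l}"
  proof (intro equalityI subsetI)
    fix e assume "e \<in> set (pedges ws)"
    then obtain i where "Suc i < length ws" "e = {ws!i, ws!Suc i}" by (auto simp: set_pedges)
    then show "e \<in> (\<lambda>i. {v i, v (Suc i mod l)}) ` {0..<l}" using nth len by auto
  next
    fix e assume "e \<in> (\<lambda>i. {v i, v (Suc i mod l)}) ` {0..<l}"
    then obtain i where "i < l" "e = {v i, v (Suc i mod l)}" by auto
    then show "e \<in> set (pedges ws)" unfolding set_pedges using nth[of i] len by auto
  qed
  have dist: "distinct (pedges ws)"
    by (rule card_distinct) (simp add: sp card_cyc_edges[OF inj l3] length_pedges len)
  have "hd ws = last ws" using l3 by (simp add: ws_def hd_map last_map del: upt_Suc)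
  then have "ctrail F ws" using dist sp ed l3 len by (auto simp: ctrail_def)
  moreover have "length (pedges ws) = l" by (simp add: length_pedges len)
  ultimately show ?thesis using len by auto
qed

lemma decomp:
  fixes E :: "nat set set"
  assumes "finite E" "\<forall>e\<in>E. card e = 2"
  shows "\<exists>CS. finite CS \<and> (\<forall>c\<in>CS. ctrail E c) \<and>
     (\<forall>c\<in>CS. \<forall>c'\<in>CS. c \<noteq> c' \<longrightarrow> set (pedges c) \<inter> set (pedges c') = {}) \<and>
     card E \<le> card (\<Union>c\<in>CS. set (pedges c)) + card (\<Union>E)"
  using assms
proof (induction "card E" arbitrary: E rule: less_induct)
  case less
  have finU: "finite (\<Union>E)" using less.prems by (intro finite_Union) (auto intro: card_ge_0_finite)
  show ?case
  proof (cases "\<exists>v. deg E v = 1")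
    case True
    then obtain v where "deg E v = 1" by blast
    then obtain e where ev: "{x\<in>E. v \<in> x} = {e}" unfolding deg_def by (auto simp: card_Suc_eq)
    then have eE: "e \<in> E" "v \<in> e" by auto
    define E' where "E' = E - {e}"
    have cE': "card E' < card E" unfolding E'_def using eE less.prems by (intro card_Diff1_less) auto
    obtain CS where CS: "finite CS" "\<forall>c\<in>CS. ctrail E' c"
      "\<forall>c\<in>CS. \<forall>c'\<in>CS. c \<noteq> c' \<longrightarrow> set (pedges c) \<inter> set (pedges c') = {}"
      "card E' \<le> card (\<Union>c\<in>CS. set (pedges c)) + card (\<Union>E')"
      using less.hyps[OF cE'] less.prems by (auto simp: E'_def)
    have "\<Union>E' \<subseteq> \<Union>E - {v}" using ev by (auto simp: E'_def)
    moreover have "v \<in> \<Union>E" using eE by auto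
    ultimately have "card (\<Union>E') < card (\<Union>E)"
    proof -
      assume a: "\<Union>E' \<subseteq> \<Union>E - {v}" "v \<in> \<Union>E"
      have "card (\<Union>E') \<le> card (\<Union>E - {v})" using finU a by (intro card_mono) auto
      moreover have "card (\<Union>E - {v}) < card (\<Union>E)" using finU a(2) by (rule card_Diff1_less)
      ultimately show ?thesis by linarith
    qed 
    moreover have "card E = Suc (card E')" unfolding E'_def
      by (rule card_Suc_Diff1[symmetric]) (use eE less.prems in auto)
    ultimately show ?thesis using CS by (intro exI[of _ CS]) (auto simp: E'_def intro: ctrail_mono)
  next
    case False
    show ?thesis
    proof (cases "E = {}")
      case True then show ?thesis by (intro exI[of _ "{}"]) auto
    next
      case ne: False
      have nd: "\<forall>v. deg E v \<noteq> 1" using False by auto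
      obtain l where l: "has_cycle_of_length E l" "l \<le> card E"
        using cycle_exists[OF less.prems(1) ne less.prems(2) nd] by blast
      obtain c where c: "ctrail E c" "length (pedges c) = l" "set c \<noteq> {}"
        using cycle_ctrail[OF l(1)] by blast
      have l3: "3 \<le> l" using l(1) by (simp add: has_cycle_of_length_def)
      define E' where "E' = E - set (pedges c)"
      have sub: "set (pedges c) \<subseteq> E" using c by (simp add: ctrail_def)
      have cardc: "card (set (pedges c)) = l" using c by (simp add: ctrail_def distinct_card)
      have cE: "card E' = card E - l" using sub cardc less.prems by (simp add: E'_def card_Diff_subset finite_subset)
      have cE': "card E' < card E" using cE l l3 by simp
      obtain CS where CS: "finite CS" "\<forall>c\<in>CS. ctrail E' c"
        "\<forall>c\<in>CS. \<forall>c'\<in>CS. c \<noteq> c' \<longrightarrow> set (pedges c) \<inter> set (pedges c') = {}"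
        "card E' \<le> card (\<Union>c\<in>CS. set (pedges c)) + card (\<Union>E')"
        using less.hyps[OF cE'] less.prems by (auto simp: E'_def)
      have dis: "set (pedges c') \<inter> set (pedges c) = {}" if "c' \<in> CS" for c'
        using CS(2) that by (auto simp: ctrail_def E'_def)
      have cnot: "c \<notin> CS"
      proof
        assume "c \<in> CS"
        then have "set (pedges c) = {}" using dis[of c] by simp
        then show False using cardc l3 by simp
      qed
      define U where "U = (\<Union>c\<in>CS. set (pedges c))"
      have finUU: "finite U" unfolding U_def using CS(1) by auto
      have "(\<Union>c'\<in>insert c CS. set (pedges c')) = set (pedges c) \<union> U" by (auto simp: U_def)
      moreover have "set (pedges c) \<inter> U = {}" using dis by (auto simp: U_def)
      ultimately have cu: "card (\<Union>c'\<in>insert c CS. set (pedges c')) = l + card U"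
        using finUU cardc by (simp add: card_Un_disjoint)
      have "card (\<Union>E') \<le> card (\<Union>E)" using finU by (intro card_mono) (auto simp: E'_def)
      then have "card E \<le> card (\<Union>c'\<in>insert c CS. set (pedges c')) + card (\<Union>E)"
        using cu CS(4) cE l(2) \<open>card (\<Union>E') \<le> card (\<Union>E)\<close> unfolding U_def by linarith
      moreover have "\<forall>c'\<in>insert c CS. ctrail E c'" using c CS(2) by (auto simp: E'_def intro: ctrail_mono)
      moreover have "\<forall>x\<in>insert c CS. \<forall>y\<in>insert c CS. x \<noteq> y \<longrightarrow> set (pedges x) \<inter> set (pedges y) = {}"
      proof (intro ballI impI)
        fix x y assume xy: "x \<in> insert c CS" "y \<in> insert c CS" "x \<noteq> y"
        show "set (pedges x) \<inter> set (pedges y) = {}"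
        proof (cases "x = c")
          case True then have "y \<in> CS" using xy by auto
          then show ?thesis using dis[of y] True by (simp add: Int_commute)
        next
          case False then have x: "x \<in> CS" using xy by auto
          show ?thesis
          proof (cases "y = c")
            case True then show ?thesis using dis[OF x] by simp
          next
            case False then show ?thesis using CS(3) x xy by auto
          qed
        qed
      qed
      ultimately show ?thesis using CS(1) by (intro exI[of _ "insert c CS"]) auto
    qed
  qed
qed


lemma ctrail_rotate:
  assumes ct: "ctrail E xs" and u: "u \<in> set xs"
  shows "\<exists>xs'. ctrail E xs' \<and> hd xs' = u \<and> set (pedges xs') = set (pedges xs) \<and> set xs' = set xs"
proof -
  obtain a b where xs: "xs = a @ u # b" using split_list[OF u] by blast
  show ?thesis
  proof (cases "a = []")
    case True then show ?thesis using ct xs by auto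
  next
    case False
    define xs' where "xs' = (u # b) @ tl a @ [u]"
    have hl: "hd a = last (u # b)" using ct xs False by (simp add: ctrail_def)
    have e1: "pedges xs = pedges a @ pedges (last a # u # b)"
      using pedges_append[OF False, of "u # b"] xs by simp
    have "pedges xs' = pedges (u # b) @ pedges (last (u # b) # tl a @ [u])"
      unfolding xs'_def by (rule pedges_append) simp
    also have "last (u # b) # tl a @ [u] = a @ [u]" using hl False by (metis append_Cons list.collapse)
    also have "pedges (a @ [u]) = pedges a @ pedges [last a, u]" using pedges_append[OF False] by simp
    finally have e2: "pedges xs' = pedges (u # b) @ pedges a @ [{last a, u}]" by simp
    have m: "mset (pedges xs') = mset (pedges xs)" using e1 e2 by simp
    have "distinct (pedges xs')" using ct mset_eq_imp_distinct_iff[OF m] by (simp add: ctrail_def)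
    moreover have "set (pedges xs') = set (pedges xs)" using arg_cong[OF m, of set_mset] by simp
    moreover have "set xs' = set xs"
    proof -
      have "set a = insert (hd a) (set (tl a))" using False by (metis list.collapse list.simps(15))
      moreover have "hd a \<in> set (u # b)" using hl by simp
      ultimately show ?thesis unfolding xs xs'_def by auto
    qed
    moreover have "2 \<le> length xs'" "hd xs' = u" "last xs' = u" by (auto simp: xs'_def)
    ultimately have "ctrail E xs'" "set (pedges xs') = set (pedges xs)" "set xs' = set xs" "hd xs' = u"
      using ct unfolding ctrail_def by simp_all
    then show ?thesis by blast
  qed
qed

lemma ctrail_splice:
  assumes cx: "ctrail E xs" and cy: "ctrail E ys" and u: "u \<in> set xs" "u \<in> set ys"
    and dj: "set (pedges xs) \<inter> set (pedges ys) = {}"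
  shows "\<exists>zs. ctrail E zs \<and> set (pedges zs) = set (pedges xs) \<union> set (pedges ys) \<and> set zs = set xs \<union> set ys"
proof -
  obtain xs' where x: "ctrail E xs'" "hd xs' = u" "set (pedges xs') = set (pedges xs)" "set xs' = set xs"
    using ctrail_rotate[OF cx u(1)] by blast
  obtain ys' where y: "ctrail E ys'" "hd ys' = u" "set (pedges ys') = set (pedges ys)" "set ys' = set ys"
    using ctrail_rotate[OF cy u(2)] by blast
  define zs where "zs = xs' @ tl ys'"
  have xne: "xs' \<noteq> []" and yne: "ys' \<noteq> []" using x(1) y(1) by (auto simp: ctrail_def)
  have lx: "last xs' = u" using x by (simp add: ctrail_def)
  have ly: "u # tl ys' = ys'" using y(2) yne by (metis list.collapse)
  have pz: "pedges zs = pedges xs' @ pedges ys'"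
    unfolding zs_def using pedges_append[OF xne, of "tl ys'"] lx ly by simp
  have "distinct (pedges zs)" using pz x y dj by (simp add: ctrail_def)
  moreover have "set (pedges zs) = set (pedges xs) \<union> set (pedges ys)" using pz x y by simp
  moreover have "set zs = set xs \<union> set ys"
  proof -
    have "set ys' = insert u (set (tl ys'))" using ly by (metis list.simps(15))
    then show ?thesis using x y u by (auto simp: zs_def)
  qed
  moreover have "2 \<le> length zs" using x(1) by (simp add: zs_def ctrail_def)
  moreover have "hd zs = u" using x(2) xne by (simp add: zs_def)
  moreover have "last zs = u"
  proof -
    have "tl ys' \<noteq> []" using y(1) yne by (cases ys') (auto simp: ctrail_def)
    then have "last zs = last ys'" by (simp add: zs_def last_tl)
    also have "\<dots> = hd ys'" using y(1) by (simp add: ctrail_def)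
    finally show ?thesis using y(2) by simp
  qed
  moreover have "set (pedges zs) \<subseteq> E" using pz x y by (simp add: ctrail_def)
  ultimately have "ctrail E zs" "set (pedges zs) = set (pedges xs) \<union> set (pedges ys)" "set zs = set xs \<union> set ys"
    unfolding ctrail_def by simp_all
  then show ?thesis by blast
qed

lemma splice_many:
  assumes "finite U" "ctrail E c"
    "\<forall>t\<in>U. ctrail E t \<and> set t \<inter> set c \<noteq> {} \<and> set (pedges t) \<inter> set (pedges c) = {}"
    "\<forall>t\<in>U. \<forall>t'\<in>U. t \<noteq> t' \<longrightarrow> set (pedges t) \<inter> set (pedges t') = {}"
  shows "\<exists>c'. ctrail E c' \<and> set (pedges c') = set (pedges c) \<union> (\<Union>t\<in>U. set (pedges t))
     \<and> set c' = set c \<union> (\<Union>t\<in>U. set t)"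
  using assms
proof (induction U rule: finite_induct)
  case empty then show ?case by auto
next
  case (insert t U)
  have p3: "\<forall>t\<in>U. ctrail E t \<and> set t \<inter> set c \<noteq> {} \<and> set (pedges t) \<inter> set (pedges c) = {}"
    using insert.prems(2) by simp
  have p4: "\<forall>x\<in>U. \<forall>y\<in>U. x \<noteq> y \<longrightarrow> set (pedges x) \<inter> set (pedges y) = {}"
    using insert.prems(3) by simp
  obtain c'' where c'': "ctrail E c''" "set (pedges c'') = set (pedges c) \<union> (\<Union>t\<in>U. set (pedges t))"
     "set c'' = set c \<union> (\<Union>t\<in>U. set t)"
    using insert.IH[OF insert.prems(1) p3 p4] by blast
  have tt: "ctrail E t" "set t \<inter> set c \<noteq> {}" "set (pedges t) \<inter> set (pedges c) = {}"
    using insert.prems(2) by auto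
  obtain u where u: "u \<in> set t" "u \<in> set c" using tt(2) by blast
  have dU: "set (pedges t) \<inter> set (pedges t') = {}" if "t' \<in> U" for t'
    using insert.prems(3) that insert.hyps(2) by (metis insertCI)
  have dj: "set (pedges c'') \<inter> set (pedges t) = {}"
    using c''(2) tt(3) dU by blast
  obtain zs where zs: "ctrail E zs" "set (pedges zs) = set (pedges c'') \<union> set (pedges t)"
      "set zs = set c'' \<union> set t"
    using ctrail_splice[OF c''(1) tt(1) _ u(1) dj] u(2) c''(3) by blast
  show ?case
    by (rule exI[of _ zs]) (use zs c'' in auto)
qed

lemma merge:
  assumes "finite CS" "\<forall>c\<in>CS. ctrail E c"
    "\<forall>c\<in>CS. \<forall>c'\<in>CS. c \<noteq> c' \<longrightarrow> set (pedges c) \<inter> set (pedges c') = {}"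
  shows "\<exists>TS. finite TS \<and> (\<forall>t\<in>TS. ctrail E t) \<and>
    (\<forall>t\<in>TS. \<forall>t'\<in>TS. t \<noteq> t' \<longrightarrow> set (pedges t) \<inter> set (pedges t') = {} \<and> set t \<inter> set t' = {}) \<and>
    (\<Union>t\<in>TS. set (pedges t)) = (\<Union>c\<in>CS. set (pedges c)) \<and> (\<Union>t\<in>TS. set t) = (\<Union>c\<in>CS. set c)"
  using assms
proof (induction CS rule: finite_induct)
  case empty then show ?case by (intro exI[of _ "{}"]) auto
next
  case (insert c CS)
  have p2: "\<forall>c\<in>CS. ctrail E c" using insert.prems(1) by simp
  have p3: "\<forall>x\<in>CS. \<forall>y\<in>CS. x \<noteq> y \<longrightarrow> set (pedges x) \<inter> set (pedges y) = {}"
    using insert.prems(2) by simp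
  obtain TS where TSall: "finite TS \<and> (\<forall>t\<in>TS. ctrail E t) \<and>
    (\<forall>t\<in>TS. \<forall>t'\<in>TS. t \<noteq> t' \<longrightarrow> set (pedges t) \<inter> set (pedges t') = {} \<and> set t \<inter> set t' = {}) \<and>
    (\<Union>t\<in>TS. set (pedges t)) = (\<Union>c\<in>CS. set (pedges c)) \<and> (\<Union>t\<in>TS. set t) = (\<Union>c\<in>CS. set c)"
    using insert.IH[OF p2 p3] by (rule exE)
  note TS = conjunct1[OF TSall] conjunct1[OF conjunct2[OF TSall]]
    conjunct1[OF conjunct2[OF conjunct2[OF TSall]]]
    conjunct1[OF conjunct2[OF conjunct2[OF conjunct2[OF TSall]]]]
    conjunct2[OF conjunct2[OF conjunct2[OF conjunct2[OF TSall]]]]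
  have cc: "ctrail E c" using insert.prems(1) by simp
  have dcCS: "set (pedges c) \<inter> set (pedges x) = {}" if "x \<in> CS" for x
    using insert.prems(2) that insert.hyps(2) by (metis insertCI)
  have dcTS: "set (pedges t) \<inter> set (pedges c) = {}" if "t \<in> TS" for t
  proof -
    have "set (pedges t) \<subseteq> (\<Union>c\<in>CS. set (pedges c))" using TS(4) that by blast
    then show ?thesis using dcCS by blast
  qed
  define U where "U = {t\<in>TS. set t \<inter> set c \<noteq> {}}"
  have finU: "finite U" using TS(1) by (simp add: U_def)
  have U3: "\<forall>t\<in>U. ctrail E t \<and> set t \<inter> set c \<noteq> {} \<and> set (pedges t) \<inter> set (pedges c) = {}"
    using TS(2) dcTS by (auto simp: U_def)
  have U4: "\<forall>t\<in>U. \<forall>t'\<in>U. t \<noteq> t' \<longrightarrow> set (pedges t) \<inter> set (pedges t') = {}"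
    using TS(3) by (auto simp: U_def)
  obtain c' where c': "ctrail E c'" "set (pedges c') = set (pedges c) \<union> (\<Union>t\<in>U. set (pedges t))"
     "set c' = set c \<union> (\<Union>t\<in>U. set t)"
    using splice_many[OF finU cc U3 U4] by blast
  define TS' where "TS' = insert c' (TS - U)"
  have disj: "set (pedges t) \<inter> set (pedges c') = {} \<and> set t \<inter> set c' = {}" if t: "t \<in> TS - U" for t
  proof -
    have tTS: "t \<in> TS" and tU: "t \<notin> U" using t by auto
    have a: "set t \<inter> set c = {}" using tTS tU by (auto simp: U_def)
    have b: "set (pedges t) \<inter> set (pedges u) = {} \<and> set t \<inter> set u = {}" if "u \<in> U" for u
    proof -
      have "u \<in> TS" "u \<noteq> t" using that tU by (auto simp: U_def)
      then show ?thesis using TS(3) tTS by blast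
    qed
    have "set (pedges t) \<inter> set (pedges c') = {}" using c'(2) dcTS[OF tTS] b by blast
    moreover have "set t \<inter> set c' = {}" using c'(3) a b by blast
    ultimately show ?thesis by blast
  qed
  have pw: "\<forall>t\<in>TS'. \<forall>t'\<in>TS'. t \<noteq> t' \<longrightarrow> set (pedges t) \<inter> set (pedges t') = {} \<and> set t \<inter> set t' = {}"
  proof (intro ballI impI)
    fix x y assume xy: "x \<in> TS'" "y \<in> TS'" "x \<noteq> y"
    show "set (pedges x) \<inter> set (pedges y) = {} \<and> set x \<inter> set y = {}"
    proof (cases "x = c'")
      case True
      then have "y \<in> TS - U" using xy by (auto simp: TS'_def)
      then show ?thesis using disj[of y] True by blast
    next
      case False
      then have x: "x \<in> TS - U" using xy by (auto simp: TS'_def)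
      show ?thesis
      proof (cases "y = c'")
        case True then show ?thesis using disj[OF x] by blast
      next
        case False
        then have "y \<in> TS" using xy by (auto simp: TS'_def)
        then show ?thesis using TS(3) x xy(3) by blast
      qed
    qed
  qed
  have UTS: "U \<subseteq> TS" by (auto simp: U_def)
  have e1: "(\<Union>t\<in>TS'. set (pedges t)) = (\<Union>x\<in>insert c CS. set (pedges x))"
  proof -
    have "(\<Union>t\<in>TS'. set (pedges t)) = set (pedges c) \<union> (\<Union>t\<in>U. set (pedges t)) \<union> (\<Union>t\<in>TS - U. set (pedges t))"
      using c'(2) by (auto simp: TS'_def)
    also have "\<dots> = set (pedges c) \<union> (\<Union>t\<in>TS. set (pedges t))" using UTS by blast
    finally show ?thesis using TS(4) by simp
  qed
  have e2: "(\<Union>t\<in>TS'. set t) = (\<Union>x\<in>insert c CS. set x)"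
  proof -
    have "(\<Union>t\<in>TS'. set t) = set c \<union> (\<Union>t\<in>U. set t) \<union> (\<Union>t\<in>TS - U. set t)"
      using c'(3) by (auto simp: TS'_def)
    also have "\<dots> = set c \<union> (\<Union>t\<in>TS. set t)" using UTS by blast
    finally show ?thesis using TS(5) by simp
  qed
  have "finite TS'" using TS(1) by (simp add: TS'_def)
  moreover have "\<forall>t\<in>TS'. ctrail E t" using TS(2) c'(1) by (auto simp: TS'_def)
  ultimately show ?case using pw e1 e2 by blast
qed

lemma best_trail:
  assumes fin: "finite TS" and ct: "\<forall>t\<in>TS. ctrail E t"
    and pw: "\<forall>t\<in>TS. \<forall>t'\<in>TS. t \<noteq> t' \<longrightarrow> set (pedges t) \<inter> set (pedges t') = {} \<and> set t \<inter> set t' = {}"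
    and sub: "(\<Union>t\<in>TS. set t) \<subseteq> V" and finV: "finite V"
    and pos: "0 < card (\<Union>t\<in>TS. set (pedges t))"
  shows "\<exists>t\<in>TS. card (\<Union>t\<in>TS. set (pedges t)) * card (set t) \<le> card V * length (pedges t)"
proof (rule ccontr)
  define S where "S = card (\<Union>t\<in>TS. set (pedges t))"
  assume "\<not> ?thesis"
  then have lt: "card V * length (pedges t) < S * card (set t)" if "t \<in> TS" for t
    using that by (auto simp: S_def not_le)
  have ne: "TS \<noteq> {}" using pos by auto
  have s1: "(\<Sum>t\<in>TS. length (pedges t)) = S"
  proof -
    have "(\<Sum>t\<in>TS. length (pedges t)) = (\<Sum>t\<in>TS. card (set (pedges t)))"
      using ct by (intro sum.cong) (auto simp: ctrail_def distinct_card)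
    also have "\<dots> = S" unfolding S_def
      by (rule card_UN_disjoint[symmetric]) (use fin pw in auto)
    finally show ?thesis .
  qed
  have s2: "(\<Sum>t\<in>TS. card (set t)) \<le> card V"
  proof -
    have "(\<Sum>t\<in>TS. card (set t)) = card (\<Union>t\<in>TS. set t)"
      by (rule card_UN_disjoint[symmetric]) (use fin pw in auto)
    also have "\<dots> \<le> card V" using sub finV by (rule card_mono[rotated])
    finally show ?thesis .
  qed
  have "card V * S = (\<Sum>t\<in>TS. card V * length (pedges t))" unfolding s1[symmetric] by (simp add: sum_distrib_left)
  also have "\<dots> < (\<Sum>t\<in>TS. S * card (set t))" using fin ne lt by (intro sum_strict_mono) auto
  also have "\<dots> = S * (\<Sum>t\<in>TS. card (set t))" by (simp add: sum_distrib_left)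
  also have "\<dots> \<le> S * card V" using s2 by simp
  finally show False by simp
qed

lemma trail_exists:
  fixes E :: "nat set set"
  assumes fE: "finite E" and two: "\<forall>e\<in>E. card e = 2" and sub: "\<Union>E \<subseteq> V" and finV: "finite V"
    and big: "card V < card E"
  shows "\<exists>ws. ctrail E ws \<and> (card E - card V) * card (set ws) \<le> card V * length (pedges ws)"
proof -
  obtain CS where CSall: "finite CS \<and> (\<forall>c\<in>CS. ctrail E c) \<and>
     (\<forall>c\<in>CS. \<forall>c'\<in>CS. c \<noteq> c' \<longrightarrow> set (pedges c) \<inter> set (pedges c') = {}) \<and>
     card E \<le> card (\<Union>c\<in>CS. set (pedges c)) + card (\<Union>E)"
    using decomp[OF fE two] by (rule exE)
  then have CS1: "finite CS" and CS2: "\<forall>c\<in>CS. ctrail E c"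
    and CS3: "\<forall>c\<in>CS. \<forall>c'\<in>CS. c \<noteq> c' \<longrightarrow> set (pedges c) \<inter> set (pedges c') = {}"
    and CS4: "card E \<le> card (\<Union>c\<in>CS. set (pedges c)) + card (\<Union>E)" by simp_all
  obtain TS where TSall: "finite TS \<and> (\<forall>t\<in>TS. ctrail E t) \<and>
    (\<forall>t\<in>TS. \<forall>t'\<in>TS. t \<noteq> t' \<longrightarrow> set (pedges t) \<inter> set (pedges t') = {} \<and> set t \<inter> set t' = {}) \<and>
    (\<Union>t\<in>TS. set (pedges t)) = (\<Union>c\<in>CS. set (pedges c)) \<and> (\<Union>t\<in>TS. set t) = (\<Union>c\<in>CS. set c)"
    using merge[OF CS1 CS2 CS3] by (rule exE)
  then have TS1: "finite TS" and TS2: "\<forall>t\<in>TS. ctrail E t"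
    and TS3: "\<forall>t\<in>TS. \<forall>t'\<in>TS. t \<noteq> t' \<longrightarrow> set (pedges t) \<inter> set (pedges t') = {} \<and> set t \<inter> set t' = {}"
    and TS4: "(\<Union>t\<in>TS. set (pedges t)) = (\<Union>c\<in>CS. set (pedges c))"
    and TS5: "(\<Union>t\<in>TS. set t) = (\<Union>c\<in>CS. set c)" by simp_all
  have cU: "card (\<Union>E) \<le> card V" using sub finV by (rule card_mono[rotated])
  define S where "S = card (\<Union>t\<in>TS. set (pedges t))"
  have SS: "card E - card V \<le> S" using CS4 cU TS4 by (simp add: S_def)
  have pos: "0 < card (\<Union>t\<in>TS. set (pedges t))" using SS big by (simp add: S_def)
  have vs: "(\<Union>t\<in>TS. set t) \<subseteq> V"
  proof -
    have "set c \<subseteq> V" if "c \<in> CS" for c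
    proof -
      have "2 \<le> length c" "set (pedges c) \<subseteq> E" using CS2 that by (auto simp: ctrail_def)
      then show ?thesis using set_sub_pedges[of c] sub by blast
    qed
    then show ?thesis using TS5 by auto
  qed
  obtain t where t: "t \<in> TS" "S * card (set t) \<le> card V * length (pedges t)"
    using best_trail[OF TS1 TS2 TS3 vs finV pos] by (auto simp: S_def)
  have "(card E - card V) * card (set t) \<le> S * card (set t)" using SS by (rule mult_right_mono) simp
  then have "(card E - card V) * card (set t) \<le> card V * length (pedges t)" using t(2) by linarith
  then show ?thesis using t TS2 by (intro exI[of _ t]) auto
qed


definition cedge :: "(nat \<Rightarrow> nat) \<Rightarrow> nat \<Rightarrow> nat \<Rightarrow> nat set" where
  "cedge \<sigma> n i = {\<sigma> i, \<sigma> (Suc i mod n)}"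

lemma is_tour_E:
  assumes "is_tour n T"
  obtains \<sigma> where "3 \<le> n" "bij_betw \<sigma> {0..<n} {0..<n}" "T = cedge \<sigma> n ` {0..<n}"
proof -
  from assms have n3: "3 \<le> n" and ex: "\<exists>\<sigma>. bij_betw \<sigma> {0..<n} {0..<n} \<and> T = {{\<sigma> i, \<sigma> (Suc i mod n)} | i. i < n}"
    unfolding is_tour_def by simp_all
  from ex obtain \<sigma> where b: "bij_betw \<sigma> {0..<n} {0..<n}" and t: "T = {{\<sigma> i, \<sigma> (Suc i mod n)} | i. i < n}"
    by (elim exE conjE)
  have "{{\<sigma> i, \<sigma> (Suc i mod n)} | i. i < n} = cedge \<sigma> n ` {0..<n}"
    by (auto simp: cedge_def)
  then show ?thesis using that n3 b t by simp
qed

lemma is_tour_I: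
  assumes "3 \<le> n" "bij_betw \<sigma> {0..<n} {0..<n}"
  shows "is_tour n (cedge \<sigma> n ` {0..<n})"
proof -
  have eq: "{{\<sigma> i, \<sigma> (Suc i mod n)} | i. i < n} = cedge \<sigma> n ` {0..<n}"
    by (auto simp: cedge_def)
  show ?thesis unfolding is_tour_def
  proof (intro conjI exI[of _ \<sigma>])
    show "3 \<le> n" by (fact assms(1))
    show "bij_betw \<sigma> {0..<n} {0..<n}" by (fact assms(2))
    show "cedge \<sigma> n ` {0..<n} = {{\<sigma> i, \<sigma> (Suc i mod n)} | i. i < n}" using eq by simp
  qed
qed

lemma cedge_inj:
  assumes "3 \<le> n" "inj_on \<sigma> {0..<n}"
  shows "inj_on (cedge \<sigma> n) {0..<n}"
proof (rule inj_onI)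
  fix i j assume "i \<in> {0..<n}" "j \<in> {0..<n}" "cedge \<sigma> n i = cedge \<sigma> n j"
  then show "i = j" using cyc_edge_inj[OF assms(2) assms(1), of i j] by (simp add: cedge_def)
qed

lemma tour_cost_sum:
  assumes "3 \<le> n" "bij_betw \<sigma> {0..<n} {0..<n}"
  shows "tour_cost w (cedge \<sigma> n ` {0..<n}) = (\<Sum>i<n. w (cedge \<sigma> n i))"
proof -
  have "inj_on \<sigma> {0..<n}" using assms(2) by (simp add: bij_betw_def)
  then have "inj_on (cedge \<sigma> n) {0..<n}" using cedge_inj assms(1) by blast
  then show ?thesis unfolding tour_cost_def by (simp add: sum.reindex atLeast0LessThan)
qed

lemma card_tour:
  assumes "3 \<le> n" "bij_betw \<sigma> {0..<n} {0..<n}"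
  shows "card (cedge \<sigma> n ` {0..<n}) = n"
proof -
  have "inj_on \<sigma> {0..<n}" using assms(2) by (simp add: bij_betw_def)
  then have "inj_on (cedge \<sigma> n) {0..<n}" using cedge_inj assms(1) by blast
  then show ?thesis by (simp add: card_image)
qed

lemma cedge_props:
  assumes "3 \<le> n" "bij_betw \<sigma> {0..<n} {0..<n}" "i < n"
  shows "\<sigma> i < n" "\<sigma> (Suc i mod n) < n" "\<sigma> i \<noteq> \<sigma> (Suc i mod n)"
proof -
  have inj: "inj_on \<sigma> {0..<n}" and im: "\<sigma> ` {0..<n} = {0..<n}" using assms(2) by (auto simp: bij_betw_def)
  have s: "Suc i mod n < n" using assms by simp
  show "\<sigma> i < n" "\<sigma> (Suc i mod n) < n" using im assms(3) s by auto
  have "i \<noteq> Suc i mod n" using assms(1,3) by (auto simp: suc_mod_cases)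
  then show "\<sigma> i \<noteq> \<sigma> (Suc i mod n)" using inj assms(3) s by (auto dest: inj_onD)
qed

lemma tour_edge_form:
  assumes "is_tour n T" "e \<in> T"
  shows "\<exists>p q. e = {p, q} \<and> p \<noteq> q \<and> p < n \<and> q < n"
proof -
  obtain \<sigma> where s: "3 \<le> n" "bij_betw \<sigma> {0..<n} {0..<n}" "T = cedge \<sigma> n ` {0..<n}"
    using is_tour_E[OF assms(1)] by blast
  then obtain i where "i < n" "e = cedge \<sigma> n i" using assms(2) by auto
  then show ?thesis using cedge_props[OF s(1,2) \<open>i < n\<close>] unfolding cedge_def
    by (intro exI[of _ "\<sigma> i"] exI[of _ "\<sigma> (Suc i mod n)"]) simp
qed

lemma tour_deg:
  assumes "is_tour n T" "p < n"
  shows "card {e\<in>T. p \<in> e} = 2"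
proof -
  obtain \<sigma> where s: "3 \<le> n" "bij_betw \<sigma> {0..<n} {0..<n}" "T = cedge \<sigma> n ` {0..<n}"
    using is_tour_E[OF assms(1)] by blast
  have inj: "inj_on \<sigma> {0..<n}" and im: "\<sigma> ` {0..<n} = {0..<n}" using s(2) by (auto simp: bij_betw_def)
  have "p \<in> \<sigma> ` {0..<n}" using im assms(2) by simp
  then obtain j where j: "j < n" "\<sigma> j = p" by (elim imageE) auto
  define j' where "j' = (if j = 0 then n - 1 else j - 1)"
  have j': "j' < n \<and> Suc j' mod n = j"
  proof (cases "j = 0")
    case True
    then have "j' = n - 1" by (simp add: j'_def)
    moreover have "Suc (n - 1) = n" using s(1) by simp
    ultimately show ?thesis using True s(1) by simp
  next
    case False
    then have "j' = j - 1" by (simp add: j'_def)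
    moreover have "Suc (j - 1) = j" using False by simp
    ultimately show ?thesis using j(1) by simp
  qed
  then have j': "j' < n" "Suc j' mod n = j" by simp_all
  have jj: "j \<noteq> j'" using s(1) j by (auto simp: j'_def)
  have "{e\<in>T. p \<in> e} = {cedge \<sigma> n j, cedge \<sigma> n j'}"
  proof (intro equalityI subsetI)
    fix e assume "e \<in> {e\<in>T. p \<in> e}"
    then obtain i where i: "i < n" "e = cedge \<sigma> n i" "p \<in> e" using s(3) by auto
    have si: "Suc i mod n < n" using i by simp
    from i have "\<sigma> i = \<sigma> j \<or> \<sigma> (Suc i mod n) = \<sigma> j" using j by (auto simp: cedge_def)
    then have "i = j \<or> Suc i mod n = j" using inj i(1) si j(1) by (auto dest: inj_onD)
    then have "i = j \<or> i = j'"
    proof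
      assume "Suc i mod n = j"
      then show ?thesis using i(1) s(1) by (auto simp: j'_def suc_mod_cases split: if_splits)
    qed simp
    then show "e \<in> {cedge \<sigma> n j, cedge \<sigma> n j'}" using i by auto
  next
    fix e assume "e \<in> {cedge \<sigma> n j, cedge \<sigma> n j'}"
    then show "e \<in> {e\<in>T. p \<in> e}" using s(3) j j' by (auto simp: cedge_def)
  qed
  moreover have "cedge \<sigma> n j \<noteq> cedge \<sigma> n j'"
    using cedge_inj[OF s(1) inj] j j' jj by (auto dest: inj_onD)
  ultimately show ?thesis by simp
qed

lemma finite_tours: "finite {T. is_tour n T}"
proof (rule finite_subset)
  show "{T. is_tour n T} \<subseteq> Pow (Pow {0..<n})"
  proof
    fix T assume "T \<in> {T. is_tour n T}"
    then have "\<forall>e\<in>T. e \<subseteq> {0..<n}" using tour_edge_form[of n T] by fastforce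
    then show "T \<in> Pow (Pow {0..<n})" by auto
  qed
qed simp

lemma tour_exists: "3 \<le> n \<Longrightarrow> is_tour n (cedge id n ` {0..<n})"
  by (rule is_tour_I) auto

lemma OPT_props:
  assumes "3 \<le> n"
  shows "OPT n w \<in> {tour_cost w T | T. is_tour n T}"
    and "\<And>T. is_tour n T \<Longrightarrow> OPT n w \<le> tour_cost w T"
proof -
  have fin: "finite {tour_cost w T | T. is_tour n T}"
    using finite_tours[of n] by (simp add: setcompr_eq_image)
  have ne: "{tour_cost w T | T. is_tour n T} \<noteq> {}" using tour_exists[OF assms] by blast
  show "OPT n w \<in> {tour_cost w T | T. is_tour n T}"
    unfolding OPT_def using cInf_eq_Min[OF fin ne] Min_in[OF fin ne] by simp
  show "OPT n w \<le> tour_cost w T" if "is_tour n T" for T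
    unfolding OPT_def using fin that by (intro cInf_lower) (auto intro: bdd_below_finite)
qed

lemma metric_tri:
  "metric_instance n w \<Longrightarrow> u < n \<Longrightarrow> v < n \<Longrightarrow> x < n \<Longrightarrow> u \<noteq> v \<Longrightarrow> u \<noteq> x \<Longrightarrow> v \<noteq> x
   \<Longrightarrow> w {u, v} \<le> w {u, x} + w {x, v}"
  unfolding metric_instance_def by blast

lemma metric_nonneg:
  "metric_instance n w \<Longrightarrow> u < n \<Longrightarrow> v < n \<Longrightarrow> u \<noteq> v \<Longrightarrow> 0 \<le> w {u, v}"
  unfolding metric_instance_def by blast

lemma path_bound:
  assumes mi: "metric_instance n w" and n3: "3 \<le> n" and bij: "bij_betw \<sigma> {0..<n} {0..<n}"
  shows "a < b \<Longrightarrow> b < n \<Longrightarrow> w {\<sigma> a, \<sigma> b} \<le> (\<Sum>i\<in>{a..<b}. w {\<sigma> i, \<sigma> (Suc i)})"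
proof (induction b)
  case 0 then show ?case by simp
next
  case (Suc b)
  have inj: "inj_on \<sigma> {0..<n}" and im: "\<sigma> ` {0..<n} = {0..<n}" using bij by (auto simp: bij_betw_def)
  have lt: "\<And>i. i < n \<Longrightarrow> \<sigma> i < n" using im by auto
  show ?case
  proof (cases "a = b")
    case True then show ?thesis by simp
  next
    case False
    then have ab: "a < b" using Suc.prems by simp
    have IH: "w {\<sigma> a, \<sigma> b} \<le> (\<Sum>i\<in>{a..<b}. w {\<sigma> i, \<sigma> (Suc i)})" using Suc.IH ab Suc.prems by simp
    have d1: "\<sigma> a \<noteq> \<sigma> (Suc b)" "\<sigma> a \<noteq> \<sigma> b" "\<sigma> (Suc b) \<noteq> \<sigma> b"
      using inj ab Suc.prems by (auto dest!: inj_onD)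
    have "w {\<sigma> a, \<sigma> (Suc b)} \<le> w {\<sigma> a, \<sigma> b} + w {\<sigma> b, \<sigma> (Suc b)}"
      using metric_tri[OF mi lt lt lt d1] ab Suc.prems by simp
    also have "\<dots> \<le> (\<Sum>i\<in>{a..<b}. w {\<sigma> i, \<sigma> (Suc i)}) + w {\<sigma> b, \<sigma> (Suc b)}" using IH by simp
    also have "\<dots> = (\<Sum>i\<in>{a..<Suc b}. w {\<sigma> i, \<sigma> (Suc i)})" using ab by simp
    finally show ?thesis .
  qed
qed

lemma edge_le_tour:
  assumes mi: "metric_instance n w" and t: "is_tour n T" and uv: "u < n" "v < n" "u \<noteq> v"
  shows "w {u, v} \<le> tour_cost w T"
proof -
  obtain \<sigma> where s: "3 \<le> n" "bij_betw \<sigma> {0..<n} {0..<n}" "T = cedge \<sigma> n ` {0..<n}"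
    using is_tour_E[OF t] by blast
  have im: "\<sigma> ` {0..<n} = {0..<n}" using s(2) by (auto simp: bij_betw_def)
  have nn: "0 \<le> w (cedge \<sigma> n i)" if "i < n" for i
    using metric_nonneg[OF mi cedge_props[OF s(1,2) that]] by (simp add: cedge_def)
  have key: "w {\<sigma> a, \<sigma> b} \<le> tour_cost w T" if ab: "a < b" "b < n" for a b
  proof -
    have "w {\<sigma> a, \<sigma> b} \<le> (\<Sum>i\<in>{a..<b}. w {\<sigma> i, \<sigma> (Suc i)})"
      by (rule path_bound[OF mi s(1,2) ab])
    also have "\<dots> = (\<Sum>i\<in>{a..<b}. w (cedge \<sigma> n i))"
      using ab by (intro sum.cong) (auto simp: cedge_def)
    also have "\<dots> \<le> (\<Sum>i\<in>{0..<n}. w (cedge \<sigma> n i))"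
      using ab nn by (intro sum_mono2) auto
    also have "\<dots> = tour_cost w T" using tour_cost_sum[OF s(1,2)] s(3) by (simp add: atLeast0LessThan)
    finally show ?thesis .
  qed
  obtain a where a: "a < n" "\<sigma> a = u" using im uv(1) by (metis atLeastLessThan_iff imageE zero_le)
  obtain b where b: "b < n" "\<sigma> b = v" using im uv(2) by (metis atLeastLessThan_iff imageE zero_le)
  have "a \<noteq> b" using a b uv by auto
  then consider "a < b" | "b < a" by linarith
  then show ?thesis
  proof cases
    case 1 then show ?thesis using key[of a b] a b by simp
  next
    case 2 then show ?thesis using key[of b a] a b by (simp add: insert_commute)
  qed
qed

lemma tour_le_nOPT:
  assumes mi: "metric_instance n w" and t: "is_tour n T"
  shows "tour_cost w T \<le> real n * OPT n w"
proof -
  have n3: "3 \<le> n" using t by (simp add: is_tour_def)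
  obtain T0 where T0: "is_tour n T0" "OPT n w = tour_cost w T0" using OPT_props(1)[OF n3, of w] by auto
  obtain \<sigma> where s: "3 \<le> n" "bij_betw \<sigma> {0..<n} {0..<n}" "T = cedge \<sigma> n ` {0..<n}"
    using is_tour_E[OF t] by blast
  have "tour_cost w T = (\<Sum>e\<in>T. w e)" by (simp add: tour_cost_def)
  also have "\<dots> \<le> (\<Sum>e\<in>T. tour_cost w T0)"
  proof (rule sum_mono)
    fix e assume "e \<in> T"
    then obtain p q where "e = {p, q}" "p \<noteq> q" "p < n" "q < n" using tour_edge_form[OF t] by blast
    then show "w e \<le> tour_cost w T0" using edge_le_tour[OF mi T0(1)] by simp
  qed
  also have "\<dots> = real n * OPT n w" using card_tour[OF s(1,2)] s(3) T0(2) by simp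
  finally show ?thesis .
qed

lemma alpha_ge:
  assumes mi: "metric_instance n w" and pos: "OPT n w > 0" and ko: "k_optimal k n w T"
  shows "tour_cost w T / OPT n w \<le> alpha k n"
  unfolding alpha_def
proof (rule cSup_upper)
  show "tour_cost w T / OPT n w \<in> {tour_cost w T / OPT n w |w T. metric_instance n w \<and> OPT n w > 0 \<and> k_optimal k n w T}"
    using assms by blast
  show "bdd_above {tour_cost w T / OPT n w |w T. metric_instance n w \<and> OPT n w > 0 \<and> k_optimal k n w T}"
  proof (rule bdd_aboveI)
    fix x assume "x \<in> {tour_cost w T / OPT n w |w T. metric_instance n w \<and> OPT n w > 0 \<and> k_optimal k n w T}"
    then obtain w' T' where x: "x = tour_cost w' T' / OPT n w'" "metric_instance n w'" "OPT n w' > 0"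
      "k_optimal k n w' T'" by blast
    have "is_tour n T'" using x(4) by (simp add: k_optimal_def)
    then have "tour_cost w' T' \<le> real n * OPT n w'" using tour_le_nOPT x(2) by blast
    then show "x \<le> real n" using x(1,3) by (simp add: divide_le_eq)
  qed
qed


definition gwalk :: "nat set set \<Rightarrow> nat list \<Rightarrow> nat \<Rightarrow> nat \<Rightarrow> nat \<Rightarrow> bool" where
  "gwalk E ws u v l \<longleftrightarrow> ws \<noteq> [] \<and> set (pedges ws) \<subseteq> E \<and> hd ws = u \<and> last ws = v \<and> length ws = Suc l"

definition gdist :: "nat set set \<Rightarrow> nat \<Rightarrow> nat \<Rightarrow> nat \<Rightarrow> nat" where
  "gdist E K u v = (LEAST l. l = K \<or> (\<exists>ws. gwalk E ws u v l))"

lemma gdist_le: "gdist E K u v \<le> K"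
  unfolding gdist_def by (rule Least_le) simp

lemma gdist_self: "gdist E K u u = 0"
proof -
  have "gwalk E [u] u u 0" by (simp add: gwalk_def)
  then show ?thesis unfolding gdist_def by (intro Least_eq_0) blast
qed

lemma gdist_walk: assumes "gdist E K u v < K" shows "\<exists>ws. gwalk E ws u v (gdist E K u v)"
proof -
  have "gdist E K u v = K \<or> (\<exists>ws. gwalk E ws u v (gdist E K u v))"
    unfolding gdist_def by (rule LeastI[of _ K]) simp
  then show ?thesis using assms by simp
qed

lemma gdist_witness: "gwalk E ws u v l \<Longrightarrow> gdist E K u v \<le> l"
  unfolding gdist_def by (rule Least_le) blast

lemma gdist_pos: assumes "u \<noteq> v" "1 \<le> K" shows "1 \<le> gdist E K u v"
proof (rule ccontr)
  assume "\<not> ?thesis"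
  then have z: "gdist E K u v = 0" by simp
  then have "gdist E K u v < K" using assms by simp
  then obtain ws where "gwalk E ws u v 0" using gdist_walk z by fastforce
  then show False using assms(1) by (cases ws) (auto simp: gwalk_def)
qed

lemma gdist_edge: assumes "{u, v} \<in> E" shows "gdist E K u v \<le> 1"
proof -
  have "gwalk E [u, v] u v 1" using assms by (simp add: gwalk_def)
  then show ?thesis by (rule gdist_witness)
qed

lemma pedges_rev: "pedges (rev xs) = rev (pedges xs)"
proof (induction xs rule: pedges.induct)
  case (1 x y zs)
  have "pedges (rev (x # y # zs)) = pedges (rev (y # zs) @ [x])" by simp
  also have "\<dots> = pedges (rev (y # zs)) @ pedges [last (rev (y # zs)), x]"
    by (rule pedges_append) simp
  also have "\<dots> = rev (pedges (y # zs)) @ [{x, y}]" using 1 by (simp add: insert_commute)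
  finally show ?case by simp
qed auto

lemma gdist_sym_le: "gdist E K u v \<le> gdist E K v u"
proof (cases "gdist E K v u < K")
  case True
  then obtain ws where ws: "gwalk E ws v u (gdist E K v u)" using gdist_walk by blast
  then have "gwalk E (rev ws) u v (gdist E K v u)"
    by (auto simp: gwalk_def pedges_rev hd_rev last_rev)
  then show ?thesis by (rule gdist_witness)
next
  case False then show ?thesis using gdist_le[of E K u v] by simp
qed

lemma gdist_sym: "gdist E K u v = gdist E K v u"
  using gdist_sym_le[of E K u v] gdist_sym_le[of E K v u] by simp

lemma gdist_tri: "gdist E K u v \<le> gdist E K u x + gdist E K x v"
proof (cases "gdist E K u x < K \<and> gdist E K x v < K")
  case True
  then obtain ws1 ws2 where w1: "gwalk E ws1 u x (gdist E K u x)" and w2: "gwalk E ws2 x v (gdist E K x v)"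
    using gdist_walk by blast
  define ws where "ws = ws1 @ tl ws2"
  have ne: "ws1 \<noteq> []" "ws2 \<noteq> []" using w1 w2 by (auto simp: gwalk_def)
  have l1: "last ws1 = hd ws2" using w1 w2 by (simp add: gwalk_def)
  have "pedges ws = pedges ws1 @ pedges (last ws1 # tl ws2)"
    unfolding ws_def by (rule pedges_append[OF ne(1)])
  also have "last ws1 # tl ws2 = ws2" using l1 ne(2) by simp
  finally have pe: "pedges ws = pedges ws1 @ pedges ws2" .
  have lst: "last ws = v"
  proof (cases "tl ws2 = []")
    case True
    then have "ws2 = [hd ws2]" using ne(2) by (cases ws2) auto
    then show ?thesis using w2 l1 w1 by (auto simp: ws_def gwalk_def True)
  next
    case False
    then show ?thesis using w2 by (simp add: ws_def gwalk_def last_tl)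
  qed
  have "gwalk E ws u v (gdist E K u x + gdist E K x v)"
    using w1 w2 pe lst ne by (auto simp: gwalk_def ws_def)
  then show ?thesis by (rule gdist_witness)
next
  case False
  then show ?thesis using gdist_le[of E K u v] by auto
qed

lemma walk_parity:
  assumes "ws \<noteq> []" "set (pedges ws) \<subseteq> E" "\<forall>e\<in>E. card e = 2"
  shows "even (length (filter (\<lambda>e. v \<in> e) (pedges ws)) + (if hd ws = v then 1 else 0) + (if last ws = v then 1 else 0))"
  using assms
proof (induction ws rule: pedges.induct)
  case (1 x y zs)
  have "{x, y} \<in> E" using 1 by simp
  then have xy: "x \<noteq> y" using 1(4) by fastforce
  have IH: "even (length (filter (\<lambda>e. v \<in> e) (pedges (y # zs))) + (if y = v then 1 else 0) + (if last (y # zs) = v then 1 else 0))"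
    using 1 by simp
  show ?case using IH xy by (auto split: if_splits)
qed auto

lemma even_sum_odd_card:
  assumes "finite S"
  shows "even ((\<Sum>e\<in>S. c e) + card {e\<in>S. odd (c e :: nat)})"
  using assms
proof (induction S rule: finite_induct)
  case empty then show ?case by simp
next
  case (insert x S)
  have "{e \<in> insert x S. odd (c e)} = (if odd (c x) then insert x {e\<in>S. odd (c e)} else {e\<in>S. odd (c e)})"
    by auto
  then have "card {e \<in> insert x S. odd (c e)} = (if odd (c x) then Suc (card {e\<in>S. odd (c e)}) else card {e\<in>S. odd (c e)})"
    using insert by auto
  then show ?case using insert by auto
qed

lemma dcount:
  assumes fX: "finite X" and fP: "finite P" and sub: "\<forall>e\<in>X. e \<subseteq> P"
  shows "(\<Sum>e\<in>X. card {p\<in>e. Q p}) = (\<Sum>p\<in>{p\<in>P. Q p}. card {e\<in>X. p \<in> e})"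
proof -
  have "(\<Sum>e\<in>X. card {p\<in>e. Q p}) = (\<Sum>e\<in>X. \<Sum>p\<in>P. if p \<in> e \<and> Q p then 1 else 0)"
  proof (rule sum.cong)
    fix e assume "e \<in> X"
    then have "{p\<in>e. Q p} = {p\<in>P. p \<in> e \<and> Q p}" using sub by auto
    then show "card {p\<in>e. Q p} = (\<Sum>p\<in>P. if p \<in> e \<and> Q p then 1 else 0)"
      using fP by (simp add: sum.inter_filter[symmetric])
  qed simp
  also have "\<dots> = (\<Sum>p\<in>P. \<Sum>e\<in>X. if p \<in> e \<and> Q p then 1 else 0)" by (rule sum.swap)
  also have "\<dots> = (\<Sum>p\<in>P. if Q p then card {e\<in>X. p \<in> e} else 0)"
  proof (rule sum.cong)
    fix p assume "p \<in> P"
    show "(\<Sum>e\<in>X. if p \<in> e \<and> Q p then 1 else 0) = (if Q p then card {e\<in>X. p \<in> e} else 0)"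
      using fX by (simp add: sum.inter_filter[symmetric])
  qed simp
  also have "\<dots> = (\<Sum>p\<in>{p\<in>P. Q p}. card {e\<in>X. p \<in> e})"
    using fP by (simp add: sum.inter_filter)
  finally show ?thesis .
qed

lemma card2_filter:
  assumes "p \<noteq> q"
  shows "card {x\<in>{p, q}. Q x} = (if Q p then 1 else 0) + (if Q q then 1 else 0)"
proof -
  have "{x\<in>{p, q}. Q x} = (if Q p then {p} else {}) \<union> (if Q q then {q} else {})" by auto
  then show ?thesis using assms by (auto simp: card_insert_if)
qed

lemma sorted_cost:
  fixes f :: "'a \<Rightarrow> nat" and g :: "nat \<Rightarrow> nat \<Rightarrow> nat"
  assumes g0: "\<And>a. g a a = 0" and gk: "\<And>a b. g a b \<le> K"
  shows "sorted (map f xs) \<Longrightarrow> (\<Sum>i<length xs - 1. g (f (xs ! i)) (f (xs ! Suc i))) \<le> K * (card (f ` set xs) - 1)"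
proof (induction xs)
  case Nil then show ?case by simp
next
  case (Cons x xs)
  show ?case
  proof (cases xs)
    case Nil then show ?thesis by simp
  next
    case (Cons y ys)
    have IH: "(\<Sum>i<length xs - 1. g (f (xs ! i)) (f (xs ! Suc i))) \<le> K * (card (f ` set xs) - 1)"
      using Cons.IH Cons.prems by simp
    have split: "(\<Sum>i<length (x # xs) - 1. g (f ((x # xs) ! i)) (f ((x # xs) ! Suc i)))
        = g (f x) (f y) + (\<Sum>i<length xs - 1. g (f (xs ! i)) (f (xs ! Suc i)))"
      using Cons by (simp add: sum.lessThan_Suc_shift del: sum.lessThan_Suc)
    have c1: "card (f ` set xs) \<ge> 1" using Cons by (simp add: card_gt_0_iff Suc_le_eq)
    show ?thesis
    proof (cases "f x = f y")
      case True
      then have "f ` set (x # xs) = f ` set xs" using Cons by auto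
      then show ?thesis using split IH True g0 by simp
    next
      case False
      have srt: "sorted (map f (x # xs))" by (fact Cons.prems)
      have "f x \<le> f y" using srt Cons by simp
      then have lt: "f x < f y" using False by simp
      have fy: "\<forall>z\<in>set xs. f y \<le> f z" using Cons.prems Cons by auto
      have "f x \<notin> f ` set xs"
      proof
        assume "f x \<in> f ` set xs"
        then obtain z where "z \<in> set xs" "f z = f x" by auto
        then show False using fy lt by fastforce
      qed
      then have cc: "card (f ` set (x # xs)) = Suc (card (f ` set xs))" by simp
      have "K * (card (f ` set xs) - 1) + K = K * card (f ` set xs)" using c1
        by (cases "card (f ` set xs)") auto
      then show ?thesis using split IH gk[of "f x" "f y"] cc by simp
    qed
  qed
qed


locale inst =
  fixes E :: "nat set set" and k :: nat and ws :: "nat list" and n :: nat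
  assumes two: "\<forall>e\<in>E. card e = 2" and finE: "finite E"
    and girth: "\<forall>l. has_cycle_of_length E l \<longrightarrow> 2 * k \<le> l"
    and k1: "1 \<le> k" and ct: "ctrail E ws" and nL: "length ws - 1 \<le> n" and n3: "3 \<le> n"
begin

definition L where "L = length ws - 1"
definition loc where "loc i = (if i < L then ws ! i else hd ws)"
definition w where "w e = real (gdist E k (loc (Min e)) (loc (Max e)))"
definition T0 where "T0 = cedge id n ` {0..<n}"

lemma lenws: "length ws = Suc L" using ct by (auto simp: L_def ctrail_def)

lemma hd_ws: "hd ws = ws ! 0" using lenws by (cases ws) auto
lemma last_ws: "ws ! L = hd ws"
proof -
  have "last ws = ws ! L" using lenws by (subst last_conv_nth) auto
  then show ?thesis using ct by (simp add: ctrail_def)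
qed

lemma ws_edge: "i < L \<Longrightarrow> {ws ! i, ws ! Suc i} \<in> E"
proof -
  assume "i < L"
  then have "{ws ! i, ws ! Suc i} \<in> set (pedges ws)" unfolding set_pedges using lenws by auto
  then show ?thesis using ct by (auto simp: ctrail_def)
qed

lemma ws_edge_neq: "i < L \<Longrightarrow> ws ! i \<noteq> ws ! Suc i"
  using ws_edge two by fastforce

lemma L2: "2 \<le> L"
proof -
  have "1 \<le> L" using ct by (auto simp: ctrail_def L_def)
  moreover have "L \<noteq> 1"
  proof
    assume "L = 1"
    then have "ws ! 0 \<noteq> ws ! 1" using ws_edge_neq[of 0] by simp
    then show False using last_ws hd_ws \<open>L = 1\<close> by simp
  qed
  ultimately show ?thesis by simp
qed

lemma Ln: "L \<le> n" using nL by (simp add: L_def)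

lemma loc_suc: "i < L \<Longrightarrow> loc (Suc i mod n) = ws ! Suc i"
proof -
  assume i: "i < L"
  show ?thesis
  proof (cases "Suc i < n")
    case True
    then have sm: "Suc i mod n = Suc i" by simp
    show ?thesis
    proof (cases "Suc i < L")
      case True then show ?thesis using sm by (simp add: loc_def)
    next
      case False
      then have "Suc i = L" using i by simp
      then show ?thesis using sm last_ws by (simp add: loc_def)
    qed
  next
    case False
    then have "Suc i = n" "Suc i = L" using i Ln by auto
    then show ?thesis using last_ws L2 hd_ws by (simp add: loc_def)
  qed
qed

lemma loc_pad: "L \<le> i \<Longrightarrow> i < n \<Longrightarrow> loc i = hd ws \<and> loc (Suc i mod n) = hd ws"
proof -
  assume i: "L \<le> i" "i < n"
  have "Suc i mod n = Suc i \<or> Suc i mod n = 0" by (metis mod_less mod_self not_less_eq i(2) le_neq_implies_less less_Suc_eq_le)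
  then show ?thesis using i L2 hd_ws by (auto simp: loc_def)
qed

lemma loc_in: "loc i \<in> set ws"
proof (cases "i < L")
  case True then show ?thesis using lenws by (simp add: loc_def)
next
  case False then show ?thesis using lenws hd_ws by (simp add: loc_def)
qed

lemma w_pair: "w {p, q} = real (gdist E k (loc p) (loc q))"
proof (cases "p \<le> q")
  case True then show ?thesis by (simp add: w_def min_def max_def)
next
  case False then show ?thesis by (simp add: w_def min_def max_def gdist_sym)
qed

lemma metric: "metric_instance n w"
  unfolding metric_instance_def
proof (intro conjI allI impI)
  fix u v x
  have "gdist E k (loc u) (loc v) \<le> gdist E k (loc u) (loc x) + gdist E k (loc x) (loc v)"
    by (rule gdist_tri)
  then have "real (gdist E k (loc u) (loc v)) \<le> real (gdist E k (loc u) (loc x)) + real (gdist E k (loc x) (loc v))"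
    by linarith
  then show "w {u, v} \<le> w {u, x} + w {x, v}" by (simp add: w_pair)
qed (simp add: w_def)

lemma T0_tour: "is_tour n T0" unfolding T0_def using n3 by (rule tour_exists)

lemma w_T0: "i < n \<Longrightarrow> w (cedge id n i) = (if i < L then 1 else 0)"
proof -
  assume i: "i < n"
  show ?thesis
  proof (cases "i < L")
    case True
    have "loc i = ws ! i" using True by (simp add: loc_def)
    then have "w (cedge id n i) = real (gdist E k (ws ! i) (ws ! Suc i))"
      by (simp add: cedge_def w_pair loc_suc[OF True])
    moreover have "gdist E k (ws ! i) (ws ! Suc i) = 1"
      using gdist_edge[OF ws_edge[OF True], of k] gdist_pos[OF ws_edge_neq[OF True] k1, of E] by simp
    ultimately show ?thesis using True by simp
  next
    case False
    then show ?thesis using loc_pad[of i] i by (simp add: cedge_def w_pair gdist_self)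
  qed
qed

lemma cost_T0: "tour_cost w T0 = real L"
proof -
  have "tour_cost w T0 = (\<Sum>i<n. w (cedge id n i))" unfolding T0_def
    by (rule tour_cost_sum) (use n3 in auto)
  also have "\<dots> = (\<Sum>i<n. if i < L then 1 else 0)" by (rule sum.cong) (auto simp: w_T0)
  also have "\<dots> = (\<Sum>i<L. (1::real))"
    using Ln by (intro sum.mono_neutral_cong_right) auto
  also have "\<dots> = real L" by simp
  finally show ?thesis .
qed

lemma w_cedge: "w (cedge \<sigma> n i) = real (gdist E k (loc (\<sigma> i)) (loc (\<sigma> (Suc i mod n))))"
  by (simp add: cedge_def w_pair)

lemma cost_ge1: assumes t: "is_tour n T" shows "1 \<le> tour_cost w T"
proof -
  obtain \<sigma> where s: "3 \<le> n" "bij_betw \<sigma> {0..<n} {0..<n}" "T = cedge \<sigma> n ` {0..<n}"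
    using is_tour_E[OF t] by blast
  have im: "\<sigma> ` {0..<n} = {0..<n}" using s(2) by (auto simp: bij_betw_def)
  have "\<exists>i<n. loc (\<sigma> i) \<noteq> loc (\<sigma> (Suc i mod n))"
  proof (rule ccontr)
    assume "\<not> ?thesis"
    then have eq: "\<And>i. i < n \<Longrightarrow> loc (\<sigma> (Suc i mod n)) = loc (\<sigma> i)" by metis
    have all: "i < n \<Longrightarrow> loc (\<sigma> i) = loc (\<sigma> 0)" for i
    proof (induction i)
      case 0 then show ?case by simp
    next
      case (Suc i)
      then have "Suc i mod n = Suc i" by simp
      then show ?case using eq[of i] Suc by simp
    qed
    have "0 \<in> \<sigma> ` {0..<n}" "1 \<in> \<sigma> ` {0..<n}" using im n3 by auto
    then obtain a b where ab: "a < n" "\<sigma> a = 0" "b < n" "\<sigma> b = 1" by auto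
    then have "loc 0 = loc 1" using all[of a] all[of b] by simp
    moreover have "loc 0 = ws ! 0" "loc 1 = ws ! 1" using L2 by (auto simp: loc_def)
    moreover have "ws ! 0 \<noteq> ws ! 1" using ws_edge_neq[of 0] L2 by simp
    ultimately show False by simp
  qed
  then obtain i where i: "i < n" "loc (\<sigma> i) \<noteq> loc (\<sigma> (Suc i mod n))" by blast
  have "1 \<le> w (cedge \<sigma> n i)" using gdist_pos[OF i(2) k1] by (simp add: w_cedge)
  also have "\<dots> \<le> (\<Sum>j\<in>{0..<n}. w (cedge \<sigma> n j))"
    by (rule member_le_sum) (use i in \<open>auto simp: w_cedge\<close>)
  also have "\<dots> = tour_cost w T" using tour_cost_sum[OF s(1,2)] s(3) by (simp add: atLeast0LessThan)
  finally show ?thesis .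
qed

lemma OPT_ge1: "1 \<le> OPT n w"
proof -
  obtain T where "is_tour n T" "OPT n w = tour_cost w T" using OPT_props(1)[OF n3, of w] by auto
  then show ?thesis using cost_ge1 by simp
qed

lemma OPT_le: "OPT n w \<le> real (k * card (set ws))"
proof -
  define ys where "ys = sort_key loc [0..<n]"
  have ys: "distinct ys" "set ys = {0..<n}" "length ys = n" "sorted (map loc ys)"
    by (simp_all add: ys_def distinct_sort sorted_sort_key)
  have bij: "bij_betw ((!) ys) {0..<n} {0..<n}"
    using bij_betw_nth[OF ys(1), of "{0..<n}" "{0..<n}"] ys by (simp add: atLeast0LessThan)
  define g where "g i = gdist E k (loc (ys ! i)) (loc (ys ! (Suc i mod n)))" for i
  have "OPT n w \<le> tour_cost w (cedge ((!) ys) n ` {0..<n})"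
    using OPT_props(2)[OF n3] is_tour_I[OF n3 bij] by blast
  also have "\<dots> = (\<Sum>i<n. w (cedge ((!) ys) n i))" by (rule tour_cost_sum[OF n3 bij])
  also have "\<dots> = real (\<Sum>i<n. g i)" by (simp add: w_cedge g_def)
  finally have o1: "OPT n w \<le> real (\<Sum>i<n. g i)" .
  have n1: "n = Suc (n - 1)" using n3 by simp
  have e1: "(\<Sum>i<n. g i) = (\<Sum>i<n - 1. g i) + g (n - 1)"
    by (subst n1) (simp del: Suc_diff_1)
  have "(\<Sum>i<n - 1. g i) = (\<Sum>i<length ys - 1. gdist E k (loc (ys ! i)) (loc (ys ! Suc i)))"
    using ys(3) by (intro sum.cong) (auto simp: g_def)
  also have "\<dots> \<le> k * (card (loc ` set ys) - 1)"
    by (rule sorted_cost[OF gdist_self gdist_le ys(4)])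
  finally have e2: "(\<Sum>i<n - 1. g i) \<le> k * (card (loc ` set ys) - 1)" .
  have e3: "g (n - 1) \<le> k" by (simp add: g_def gdist_le)
  have s1: "(\<Sum>i<n. g i) \<le> k * (card (loc ` set ys) - 1) + k" using e1 e2 e3 by linarith
  have c1: "1 \<le> card (loc ` set ys)" using ys(2) n3 by (simp add: card_gt_0_iff Suc_le_eq)
  have c2: "card (loc ` set ys) \<le> card (set ws)" using loc_in by (intro card_mono) auto
  have "k * (card (loc ` set ys) - 1) + k = k * card (loc ` set ys)" using c1
    by (cases "card (loc ` set ys)") auto
  also have "\<dots> \<le> k * card (set ws)" using c2 by simp
  finally have "(\<Sum>i<n. g i) \<le> k * card (set ws)" using s1 by linarith
  then show ?thesis using o1 by (meson of_nat_le_iff order_trans)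
qed

end


lemma has_cycle_mono: "has_cycle_of_length F l \<Longrightarrow> F \<subseteq> E \<Longrightarrow> has_cycle_of_length E l"
  unfolding has_cycle_of_length_def by blast

lemma count_list_filter: "count_list (filter P xs) e = (if P e then count_list xs e else 0)"
  by (induction xs) auto

lemma sum_count_filter:
  assumes "set xs \<subseteq> U" "finite U"
  shows "(\<Sum>e\<in>{e\<in>U. P e}. count_list xs e) = length (filter P xs)"
proof -
  have "(\<Sum>e\<in>{e\<in>U. P e}. count_list xs e) = (\<Sum>e\<in>{e\<in>U. P e}. count_list (filter P xs) e)"
    by (rule sum.cong) (auto simp: count_list_filter)
  also have "\<dots> = length (filter P xs)"
    by (rule sum_count_set) (use assms in auto)
  finally show ?thesis .
qed

lemma card2_minmax:
  fixes a :: "nat set"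
  assumes "card a = 2"
  shows "a = {Min a, Max a} \<and> Min a \<noteq> Max a"
proof -
  obtain p q where "a = {p, q}" "p \<noteq> q" using assms card_2_iff by metis
  then show ?thesis by (cases "p \<le> q") (auto simp: min_def max_def)
qed

lemma parity_combine:
  fixes s x a g c r d :: nat
  assumes "even (s + x)" "s = a + g" "even (a + c)" "r = g + d" "even d" "even (c + r)"
  shows "even x"
  using assms by presburger

lemma card_le_sum_pos:
  assumes "finite S" "\<forall>e\<in>S. 1 \<le> (c e :: nat)"
  shows "card S \<le> (\<Sum>e\<in>S. c e)"
proof -
  have "card S = (\<Sum>e\<in>S. 1)" by simp
  also have "\<dots> \<le> (\<Sum>e\<in>S. c e)" using assms by (intro sum_mono) auto
  finally show ?thesis .
qed

context inst begin

lemma T0_edge: "r \<in> T0 \<Longrightarrow> \<exists>j<n. r = {j, Suc j mod n}"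
  by (auto simp: T0_def cedge_def)

lemma deg_balance:
  assumes t: "is_tour n T'" and p: "p < n"
  shows "card {e\<in>T0 - T'. p \<in> e} = card {e\<in>T' - T0. p \<in> e}"
proof -
  have fT0: "finite T0" by (simp add: T0_def)
  obtain \<sigma> where s: "3 \<le> n" "bij_betw \<sigma> {0..<n} {0..<n}" "T' = cedge \<sigma> n ` {0..<n}"
    using is_tour_E[OF t] by blast
  have fT': "finite T'" using s(3) by simp
  have "card {e\<in>T0. p \<in> e} = 2" by (rule tour_deg[OF T0_tour p])
  moreover have "{e\<in>T0. p \<in> e} = {e\<in>T0 \<inter> T'. p \<in> e} \<union> {e\<in>T0 - T'. p \<in> e}" by auto
  moreover have "card ({e\<in>T0 \<inter> T'. p \<in> e} \<union> {e\<in>T0 - T'. p \<in> e}) = card {e\<in>T0 \<inter> T'. p \<in> e} + card {e\<in>T0 - T'. p \<in> e}"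
    by (rule card_Un_disjoint) (use fT0 in auto)
  ultimately have a: "card {e\<in>T0 \<inter> T'. p \<in> e} + card {e\<in>T0 - T'. p \<in> e} = 2" by simp
  have "card {e\<in>T'. p \<in> e} = 2" by (rule tour_deg[OF t p])
  moreover have "{e\<in>T'. p \<in> e} = {e\<in>T0 \<inter> T'. p \<in> e} \<union> {e\<in>T' - T0. p \<in> e}" by auto
  moreover have "card ({e\<in>T0 \<inter> T'. p \<in> e} \<union> {e\<in>T' - T0. p \<in> e}) = card {e\<in>T0 \<inter> T'. p \<in> e} + card {e\<in>T' - T0. p \<in> e}"
    by (rule card_Un_disjoint) (use fT' in auto)
  ultimately have b: "card {e\<in>T0 \<inter> T'. p \<in> e} + card {e\<in>T' - T0. p \<in> e} = 2" by simp
  show ?thesis using a b by simp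
qed

lemma kopt_core:
  assumes t: "is_tour n T'" and ck: "card (T0 - T') \<le> k"
  shows "card {r\<in>T0 - T'. \<exists>i<L. r = {i, Suc i mod n}} \<le> (\<Sum>a\<in>T' - T0. gdist E k (loc (Min a)) (loc (Max a)))"
proof -
  define R where "R = T0 - T'"
  define A where "A = T' - T0"
  define R1 where "R1 = {r\<in>T0 - T'. \<exists>i<L. r = {i, Suc i mod n}}"
  define gd where "gd a = gdist E k (loc (Min a)) (loc (Max a))" for a
  have fT0: "finite T0" by (simp add: T0_def)
  obtain \<sigma> where s: "3 \<le> n" "bij_betw \<sigma> {0..<n} {0..<n}" "T' = cedge \<sigma> n ` {0..<n}"
    using is_tour_E[OF t] by blast
  have fT': "finite T'" using s(3) by simp
  have fR: "finite R" and fA: "finite A" using fT0 fT' by (auto simp: R_def A_def)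
  have R1R: "R1 \<subseteq> R" by (auto simp: R1_def R_def)
  have fR1: "finite R1" using fR R1R by (rule finite_subset[rotated])
  have cR1: "card R1 \<le> k" using card_mono[OF fR R1R] ck by (simp add: R_def)
  have goal: "card R1 \<le> (\<Sum>a\<in>A. gd a)"
  proof (cases "\<exists>a\<in>A. k \<le> gd a")
    case True
    then obtain a where a: "a \<in> A" "k \<le> gd a" by blast
    have "gd a \<le> (\<Sum>a\<in>A. gd a)" by (rule member_le_sum) (use fA a in auto)
    then show ?thesis using cR1 a(2) by linarith
  next
    case False
    then have lt: "\<And>a. a \<in> A \<Longrightarrow> gd a < k" by (simp add: not_le)
    have Aform: "card a = 2 \<and> a \<subseteq> {0..<n}" if "a \<in> A" for a
    proof -
      have "a \<in> T'" using that by (simp add: A_def)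
      then obtain p q where "a = {p, q}" "p \<noteq> q" "p < n" "q < n" using tour_edge_form[OF t] by blast
      then show ?thesis by auto
    qed
    define W where "W a = (SOME ws. gwalk E ws (loc (Min a)) (loc (Max a)) (gd a))" for a
    have W: "gwalk E (W a) (loc (Min a)) (loc (Max a)) (gd a)" if "a \<in> A" for a
    proof -
      have "\<exists>ws. gwalk E ws (loc (Min a)) (loc (Max a)) (gd a)"
        using gdist_walk[of E k "loc (Min a)" "loc (Max a)"] lt[OF that] by (simp add: gd_def)
      then show ?thesis unfolding W_def by (rule someI_ex)
    qed
    have Wlen: "length (pedges (W a)) = gd a" if "a \<in> A" for a
      using W[OF that] by (simp add: gwalk_def length_pedges)
    have WE: "set (pedges (W a)) \<subseteq> E" if "a \<in> A" for a
      using W[OF that] by (simp add: gwalk_def)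
    define gmap where "gmap r = loc ` r" for r :: "nat set"
    have R1form: "\<exists>i<L. r = {i, Suc i mod n} \<and> gmap r = {ws ! i, ws ! Suc i}" if rr: "r \<in> R1" for r
    proof -
      obtain i where i: "i < L" "r = {i, Suc i mod n}" using rr by (auto simp: R1_def)
      have "loc i = ws ! i" using i(1) by (simp add: loc_def)
      then have "gmap r = {ws ! i, ws ! Suc i}" using i by (simp add: gmap_def loc_suc)
      then show ?thesis using i by blast
    qed
    have gmapE: "gmap r \<in> E" if "r \<in> R1" for r
      using R1form[OF that] ws_edge by auto
    have injg: "inj_on gmap R1"
    proof (rule inj_onI)
      fix r r' assume r: "r \<in> R1" and r': "r' \<in> R1" and eq: "gmap r = gmap r'"
      obtain i where i: "i < L" "r = {i, Suc i mod n}" "gmap r = {ws ! i, ws ! Suc i}" using R1form[OF r] by blast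
      obtain j where j: "j < L" "r' = {j, Suc j mod n}" "gmap r' = {ws ! j, ws ! Suc j}" using R1form[OF r'] by blast
      have "pedges ws ! i = pedges ws ! j" using i j eq lenws by (simp add: pedges_nth)
      moreover have "distinct (pedges ws)" using ct by (simp add: ctrail_def)
      moreover have "i < length (pedges ws)" "j < length (pedges ws)" using i j lenws by (simp_all add: length_pedges)
      ultimately have "i = j" by (simp add: nth_eq_iff_index_eq)
      then show "r = r'" using i j by simp
    qed
    define G1 where "G1 = gmap ` R1"
    have cG1: "card G1 = card R1" unfolding G1_def using injg by (rule card_image)
    have fG1: "finite G1" using fR1 by (simp add: G1_def)
    define UW where "UW = (\<Union>a\<in>A. set (pedges (W a)))"
    have fUW: "finite UW" using fA by (simp add: UW_def)
    define cw where "cw e = (\<Sum>a\<in>A. count_list (pedges (W a)) e)" for e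
    have sumUW: "(\<Sum>e\<in>UW. cw e) = (\<Sum>a\<in>A. gd a)"
    proof -
      have "(\<Sum>e\<in>UW. cw e) = (\<Sum>a\<in>A. \<Sum>e\<in>UW. count_list (pedges (W a)) e)"
        unfolding cw_def by (rule sum.swap)
      also have "\<dots> = (\<Sum>a\<in>A. length (pedges (W a)))"
        by (rule sum.cong) (use fUW in \<open>auto simp: UW_def intro!: sum_count_set\<close>)
      also have "\<dots> = (\<Sum>a\<in>A. gd a)" by (rule sum.cong) (simp_all add: Wlen)
      finally show ?thesis .
    qed
    have cwpos: "1 \<le> cw e" if ee: "e \<in> UW" for e
    proof -
      obtain a where a: "a \<in> A" "e \<in> set (pedges (W a))" using ee by (auto simp: UW_def)
      then have "count_list (pedges (W a)) e \<noteq> 0" by (simp add: count_list_0_iff)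
      then have "1 \<le> count_list (pedges (W a)) e" by simp
      also have "\<dots> \<le> cw e" unfolding cw_def by (rule member_le_sum) (use fA a in auto)
      finally show ?thesis .
    qed
    show ?thesis
    proof (rule ccontr)
      assume "\<not> ?thesis"
      then have small: "(\<Sum>a\<in>A. gd a) < card R1" by simp
      define U where "U = UW \<union> G1"
      have fU: "finite U" using fUW fG1 by (simp add: U_def)
      have UE: "U \<subseteq> E" using WE gmapE by (auto simp: U_def UW_def G1_def)
      define cnt where "cnt e = cw e + (if e \<in> G1 then 1 else 0)" for e
      define F where "F = {e\<in>U. odd (cnt e)}"
      have sumW: "(\<Sum>e\<in>{e\<in>U. P e}. cw e) = (\<Sum>a\<in>A. length (filter P (pedges (W a))))" for P
      proof -
        have "(\<Sum>e\<in>{e\<in>U. P e}. cw e) = (\<Sum>a\<in>A. \<Sum>e\<in>{e\<in>U. P e}. count_list (pedges (W a)) e)"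
          unfolding cw_def by (rule sum.swap)
        also have "\<dots> = (\<Sum>a\<in>A. length (filter P (pedges (W a))))"
        proof (rule sum.cong[OF refl])
          fix a assume a: "a \<in> A"
          show "(\<Sum>e\<in>{e\<in>U. P e}. count_list (pedges (W a)) e) = length (filter P (pedges (W a)))"
            by (rule sum_count_filter) (use a fU in \<open>auto simp: U_def UW_def\<close>)
        qed
        finally show ?thesis .
      qed
      have sumG: "(\<Sum>e\<in>{e\<in>U. P e}. (if e \<in> G1 then 1 else 0::nat)) = card {e\<in>G1. P e}" for P
      proof -
        have "(\<Sum>e\<in>{e\<in>U. P e}. (if e \<in> G1 then 1 else 0::nat)) = card {e\<in>{e\<in>U. P e}. e \<in> G1}"
          using fU by (simp add: sum.inter_filter[symmetric])
        also have "{e\<in>{e\<in>U. P e}. e \<in> G1} = {e\<in>G1. P e}" by (auto simp: U_def)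
        finally show ?thesis .
      qed
      have evenF: "even (card {e\<in>F. v \<in> e})" for v
      proof -
        define Uv where "Uv = {e\<in>U. v \<in> e}"
        define \<chi> where "\<chi> e = card {x\<in>e. loc x = v}" for e :: "nat set"
        define len where "len a = length (filter (\<lambda>e. v \<in> e) (pedges (W a)))" for a
        have fUv: "finite Uv" using fU by (simp add: Uv_def)
        have P1: "even ((\<Sum>e\<in>Uv. cnt e) + card {e\<in>Uv. odd (cnt e)})" using fUv by (rule even_sum_odd_card)
        have FUv: "{e\<in>F. v \<in> e} = {e\<in>Uv. odd (cnt e)}" by (auto simp: F_def Uv_def)
        have P2: "(\<Sum>e\<in>Uv. cnt e) = (\<Sum>a\<in>A. len a) + card {e\<in>G1. v \<in> e}"
        proof -
          have "(\<Sum>e\<in>Uv. cnt e) = (\<Sum>e\<in>Uv. cw e) + (\<Sum>e\<in>Uv. (if e \<in> G1 then 1 else 0::nat))"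
            by (simp add: cnt_def sum.distrib)
          then show ?thesis using sumW[of "\<lambda>e. v \<in> e"] sumG[of "\<lambda>e. v \<in> e"]
            by (simp add: Uv_def len_def)
        qed
        have P3: "even (len a + \<chi> a)" if a: "a \<in> A" for a
        proof -
          have wa: "W a \<noteq> []" "set (pedges (W a)) \<subseteq> E" "hd (W a) = loc (Min a)" "last (W a) = loc (Max a)"
            using W[OF a] by (simp_all add: gwalk_def)
          have "even (len a + (if hd (W a) = v then 1 else 0) + (if last (W a) = v then 1 else 0))"
            unfolding len_def by (rule walk_parity[OF wa(1,2) two])
          then have ev: "even (len a + ((if loc (Min a) = v then 1 else 0) + (if loc (Max a) = v then 1 else 0)))"
            unfolding wa(3,4) by (simp only: add.assoc)
          have "\<chi> a = (if loc (Min a) = v then 1 else 0) + (if loc (Max a) = v then 1 else 0)"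
          proof -
            have mm: "a = {Min a, Max a}" "Min a \<noteq> Max a" using card2_minmax[of a] Aform[OF a] by auto
            have "\<chi> a = card {x\<in>{Min a, Max a}. loc x = v}" unfolding \<chi>_def using mm(1) by simp
            also have "\<dots> = (if loc (Min a) = v then 1 else 0) + (if loc (Max a) = v then 1 else 0)"
              by (rule card2_filter[OF mm(2)])
            finally show ?thesis .
          qed
          then show ?thesis using ev by simp
        qed
        have P3': "even ((\<Sum>a\<in>A. len a) + (\<Sum>a\<in>A. \<chi> a))"
        proof -
          have "even (\<Sum>a\<in>A. len a + \<chi> a)" by (rule dvd_sum) (use P3 in blast)
          then show ?thesis by (simp add: sum.distrib)
        qed
        have P4: "card {e\<in>G1. v \<in> e} = (\<Sum>r\<in>R1. \<chi> r)"
        proof -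
          have "{e\<in>G1. v \<in> e} = gmap ` {r\<in>R1. v \<in> gmap r}" by (auto simp: G1_def)
          moreover have "inj_on gmap {r\<in>R1. v \<in> gmap r}" using injg by (rule inj_on_subset) auto
          ultimately have "card {e\<in>G1. v \<in> e} = card {r\<in>R1. v \<in> gmap r}" by (simp add: card_image)
          also have "\<dots> = (\<Sum>r\<in>R1. if v \<in> gmap r then 1 else 0)"
            using fR1 by (simp add: sum.inter_filter[symmetric])
          also have "\<dots> = (\<Sum>r\<in>R1. \<chi> r)"
          proof (rule sum.cong[OF refl])
            fix r assume r: "r \<in> R1"
            obtain i where i: "i < L" "r = {i, Suc i mod n}" "gmap r = {ws ! i, ws ! Suc i}"
              using R1form[OF r] by blast
            have li: "loc i = ws ! i" "loc (Suc i mod n) = ws ! Suc i" using i(1) loc_suc by (auto simp: loc_def)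
            have ne: "ws ! i \<noteq> ws ! Suc i" by (rule ws_edge_neq[OF i(1)])
            have ii: "i \<noteq> Suc i mod n" using i(1) Ln n3 by (auto simp: suc_mod_cases)
            have "\<chi> r = (if loc i = v then 1 else 0) + (if loc (Suc i mod n) = v then 1 else 0)"
              unfolding \<chi>_def i(2) by (rule card2_filter[OF ii])
            then show "(if v \<in> gmap r then 1 else 0) = \<chi> r" using i(3) li ne by auto
          qed
          finally show ?thesis .
        qed
        have P5: "even (\<chi> r)" if r: "r \<in> R - R1" for r
        proof -
          have rT: "r \<in> T0" using r by (simp add: R_def)
          obtain j where j: "j < n" "r = {j, Suc j mod n}" using T0_edge[OF rT] by blast
          have "\<not> j < L" using r j by (auto simp: R1_def R_def)
          then have lj: "loc j = hd ws" "loc (Suc j mod n) = hd ws" using loc_pad[of j] j(1) by auto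
          have jj: "j \<noteq> Suc j mod n" using j(1) n3 by (auto simp: suc_mod_cases)
          have "\<chi> r = (if loc j = v then 1 else 0) + (if loc (Suc j mod n) = v then 1 else 0)"
            unfolding \<chi>_def j(2) by (rule card2_filter[OF jj])
          then show ?thesis using lj by simp
        qed
        have P6: "(\<Sum>r\<in>R. \<chi> r) = (\<Sum>r\<in>R1. \<chi> r) + (\<Sum>r\<in>R - R1. \<chi> r)"
          using sum.subset_diff[OF R1R fR, of \<chi>] by simp
        have P6': "even (\<Sum>r\<in>R - R1. \<chi> r)" by (rule dvd_sum) (use P5 in blast)
        have P7: "even ((\<Sum>a\<in>A. \<chi> a) + (\<Sum>r\<in>R. \<chi> r))"
        proof -
          define S where "S = {p\<in>{0..<n}. loc p = v}"
          have "(\<Sum>a\<in>A. \<chi> a) = (\<Sum>p\<in>S. card {e\<in>A. p \<in> e})"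
            unfolding \<chi>_def S_def by (rule dcount) (use fA Aform in auto)
          moreover have "(\<Sum>r\<in>R. \<chi> r) = (\<Sum>p\<in>S. card {e\<in>R. p \<in> e})"
          proof -
            have "\<forall>e\<in>R. e \<subseteq> {0..<n}"
            proof
              fix e assume "e \<in> R"
              then have "e \<in> T0" by (simp add: R_def)
              then obtain j where "j < n" "e = {j, Suc j mod n}" using T0_edge by blast
              then show "e \<subseteq> {0..<n}" using n3 by auto
            qed
            then show ?thesis unfolding \<chi>_def S_def by (intro dcount) (use fR in auto)
          qed
          moreover have "(\<Sum>p\<in>S. card {e\<in>R. p \<in> e}) = (\<Sum>p\<in>S. card {e\<in>A. p \<in> e})"
            by (rule sum.cong[OF refl]) (use deg_balance[OF t] in \<open>auto simp: S_def R_def A_def\<close>)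
          ultimately show ?thesis by simp
        qed
        show ?thesis
          using parity_combine[OF P1 P2[unfolded P4] P3' P6 P6' P7] FUv by simp
      qed
      have "F = {}"
      proof (rule ccontr)
        assume Fne: "F \<noteq> {}"
        have fF: "finite F" using fU by (simp add: F_def)
        have FE: "F \<subseteq> E" using UE by (auto simp: F_def)
        have two': "\<forall>e\<in>F. card e = 2" using FE two by blast
        have nd: "\<forall>v. deg F v \<noteq> 1"
        proof
          fix v show "deg F v \<noteq> 1" using evenF[of v] by (auto simp: deg_def)
        qed
        obtain l where l: "has_cycle_of_length F l" "l \<le> card F"
          using cycle_exists[OF fF Fne two' nd] by blast
        have "2 * k \<le> l" using girth has_cycle_mono[OF l(1) FE] by blast
        moreover have "card F \<le> card U" using fU by (intro card_mono) (auto simp: F_def)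
        moreover have "card U \<le> (\<Sum>e\<in>U. cnt e)"
        proof (rule card_le_sum_pos[OF fU], rule ballI)
          fix e assume "e \<in> U"
          then show "1 \<le> cnt e" using cwpos by (auto simp: U_def cnt_def)
        qed
        moreover have "(\<Sum>e\<in>U. cnt e) = (\<Sum>a\<in>A. gd a) + card R1"
        proof -
          have "(\<Sum>e\<in>U. cnt e) = (\<Sum>e\<in>U. cw e) + (\<Sum>e\<in>U. (if e \<in> G1 then 1 else 0::nat))"
            by (simp add: cnt_def sum.distrib)
          also have "(\<Sum>e\<in>U. cw e) = (\<Sum>e\<in>UW. cw e)"
          proof (rule sum.mono_neutral_right[OF fU])
            show "UW \<subseteq> U" by (simp add: U_def)
            show "\<forall>i\<in>U - UW. cw i = 0"
              by (auto simp: cw_def UW_def count_list_0_iff intro!: sum.neutral)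
          qed
          also have "(\<Sum>e\<in>U. (if e \<in> G1 then 1 else 0::nat)) = card G1"
            using sumG[of "\<lambda>_. True"] by simp
          finally show ?thesis using sumUW cG1 by simp
        qed
        ultimately show False using small cR1 l(2) by linarith
      qed
      have "G1 \<subseteq> UW"
      proof
        fix g assume g: "g \<in> G1"
        then have "g \<in> U" by (simp add: U_def)
        then have "even (cnt g)" using \<open>F = {}\<close> by (auto simp: F_def)
        then have "odd (cw g)" using g by (simp add: cnt_def)
        then have "cw g \<noteq> 0" by (metis even_zero)
        then obtain a where "a \<in> A" "count_list (pedges (W a)) g \<noteq> 0"
          unfolding cw_def by (metis (mono_tags, lifting) sum.neutral)
        then show "g \<in> UW" by (auto simp: UW_def count_list_0_iff)
      qed
      then have "card G1 \<le> card UW" using fUW by (rule card_mono[rotated])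
      also have "\<dots> \<le> (\<Sum>e\<in>UW. cw e)" by (rule card_le_sum_pos[OF fUW]) (use cwpos in blast)
      also have "\<dots> = (\<Sum>a\<in>A. gd a)" by (rule sumUW)
      finally show False using small cG1 by linarith
    qed
  qed
  then show ?thesis by (simp add: R1_def A_def gd_def)
qed

lemma kopt: "k_optimal k n w T0"
  unfolding k_optimal_def
proof (intro conjI notI)
  show "is_tour n T0" by (rule T0_tour)
next
  assume "\<exists>T'. k_move k n T0 T' \<and> tour_cost w T' < tour_cost w T0"
  then obtain T' where km: "k_move k n T0 T'" and lt: "tour_cost w T' < tour_cost w T0" by blast
  have t: "is_tour n T'" and ck: "card (T0 - T') \<le> k" using km by (auto simp: k_move_def)
  define R1 where "R1 = {r\<in>T0 - T'. \<exists>i<L. r = {i, Suc i mod n}}"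
  have fT0: "finite T0" by (simp add: T0_def)
  obtain \<sigma> where s: "3 \<le> n" "bij_betw \<sigma> {0..<n} {0..<n}" "T' = cedge \<sigma> n ` {0..<n}"
    using is_tour_E[OF t] by blast
  have fT': "finite T'" using s(3) by simp
  have R1R: "R1 \<subseteq> T0 - T'" by (auto simp: R1_def)
  have fR: "finite (T0 - T')" using fT0 by simp
  have w1: "w r = 1" if rr: "r \<in> R1" for r
  proof -
    obtain i where "i < L" "r = {i, Suc i mod n}" using rr by (auto simp: R1_def)
    then show ?thesis using w_T0[of i] Ln by (simp add: cedge_def)
  qed
  have w0: "w r = 0" if r: "r \<in> T0 - T' - R1" for r
  proof -
    have "r \<in> T0" using r by simp
    then obtain j where j: "j < n" "r = {j, Suc j mod n}" using T0_edge by blast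
    have "\<not> j < L" using r j by (auto simp: R1_def)
    then show ?thesis using w_T0[of j] j by (simp add: cedge_def)
  qed
  have sR: "(\<Sum>r\<in>T0 - T'. w r) = real (card R1)"
  proof -
    have "(\<Sum>r\<in>T0 - T'. w r) = (\<Sum>r\<in>T0 - T' - R1. w r) + (\<Sum>r\<in>R1. w r)"
      by (rule sum.subset_diff[OF R1R fR])
    also have "\<dots> = real (card R1)" using w1 w0 by simp
    finally show ?thesis .
  qed
  have sA: "(\<Sum>a\<in>T' - T0. w a) = real (\<Sum>a\<in>T' - T0. gdist E k (loc (Min a)) (loc (Max a)))"
    by (simp add: w_def)
  have core: "card R1 \<le> (\<Sum>a\<in>T' - T0. gdist E k (loc (Min a)) (loc (Max a)))"
    unfolding R1_def by (rule kopt_core[OF t ck])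
  have c2: "real (card R1) \<le> (\<Sum>a\<in>T' - T0. w a)" unfolding sA of_nat_le_iff by (rule core)
  have e1: "tour_cost w T0 = (\<Sum>e\<in>T0 \<inter> T'. w e) + (\<Sum>e\<in>T0 - T'. w e)"
    unfolding tour_cost_def by (rule sum.Int_Diff[OF fT0])
  have "T' \<inter> T0 = T0 \<inter> T'" by blast
  then have e2: "tour_cost w T' = (\<Sum>e\<in>T0 \<inter> T'. w e) + (\<Sum>e\<in>T' - T0. w e)"
    unfolding tour_cost_def using sum.Int_Diff[OF fT', of w T0] by simp
  show False using lt sR c2 e1 e2 by linarith
qed

end


lemma main_bound:
  fixes E :: "nat set set"
  assumes fE: "finite E" and two: "\<forall>e\<in>E. card e = 2"
    and girth: "\<forall>l. has_cycle_of_length E l \<longrightarrow> 2 * k \<le> l" and k1: "1 \<le> k"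
    and sub: "\<Union>E \<subseteq> V" and finV: "finite V" and big: "card V < card E"
    and nE: "card E \<le> n" and n3: "3 \<le> n"
  shows "real (card E - card V) / (real k * real (card V)) \<le> alpha k n"
proof -
  obtain ws where ws: "ctrail E ws" "(card E - card V) * card (set ws) \<le> card V * length (pedges ws)"
    using trail_exists[OF fE two sub finV big] by blast
  have lp: "length (pedges ws) \<le> card E"
  proof -
    have "length (pedges ws) = card (set (pedges ws))" using ws(1) by (simp add: ctrail_def distinct_card)
    also have "\<dots> \<le> card E" using ws(1) fE by (intro card_mono) (auto simp: ctrail_def)
    finally show ?thesis .
  qed
  have nL: "length ws - 1 \<le> n" using lp nE by (simp add: length_pedges)
  interpret I: inst E k ws n using fE two girth k1 ws(1) nL n3 by unfold_locales auto
  have Lp: "I.L = length (pedges ws)" by (simp add: I.L_def length_pedges)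
  have opos: "0 < OPT n I.w" using I.OPT_ge1 by simp
  have cV: "0 < card V"
  proof -
    obtain e where e: "e \<in> E" using big by (metis card.empty equals0I not_less0)
    then have "card e = 2" using two by simp
    then obtain x where "x \<in> e" by (metis card.empty equals0I zero_neq_numeral)
    then have "x \<in> V" using sub e by blast
    then show ?thesis using finV by (auto simp: card_gt_0_iff)
  qed
  have "ws \<noteq> []" using I.lenws by auto
  then have cws: "0 < card (set ws)" by (simp add: card_gt_0_iff)
  have "real (card E - card V) / (real k * real (card V)) \<le> real I.L / (real k * real (card (set ws)))"
  proof -
    have "real (card E - card V) * real (card (set ws)) \<le> real (card V) * real I.L"
      using ws(2) Lp by (metis of_nat_le_iff of_nat_mult)
    then show ?thesis using cV cws k1 by (simp add: divide_simps) (simp add: algebra_simps mult_left_mono)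
  qed
  also have "\<dots> \<le> real I.L / OPT n I.w"
  proof (rule divide_left_mono)
    show "OPT n I.w \<le> real k * real (card (set ws))" using I.OPT_le by simp
  qed (use opos cws k1 in simp_all)
  also have "\<dots> = tour_cost I.w I.T0 / OPT n I.w" by (simp add: I.cost_T0)
  also have "\<dots> \<le> alpha k n" by (rule alpha_ge[OF I.metric opos I.kopt])
  finally show ?thesis .
qed

lemma simple_props:
  assumes "simple_graph N E"
  shows "finite E" "\<forall>e\<in>E. card e = 2" "\<Union>E \<subseteq> {0..<N}"
proof -
  show "\<forall>e\<in>E. card e = 2" "\<Union>E \<subseteq> {0..<N}" using assms by (auto simp: simple_graph_def)
  have "E \<subseteq> Pow {0..<N}" using assms by (auto simp: simple_graph_def)
  then show "finite E" by (rule finite_subset) simp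
qed

lemma ex_attained: "\<exists>E. simple_graph N E \<and> enat g \<le> girth E \<and> card E = ex N g"
proof -
  define S where "S = {card E | E. simple_graph N E \<and> enat g \<le> girth E}"
  have "S \<subseteq> card ` Pow (Pow {0..<N})" by (auto simp: S_def simple_graph_def)
  then have fS: "finite S" by (rule finite_subset) simp
  have "\<not> has_cycle_of_length {} l" for l
  proof
    assume "has_cycle_of_length {} l"
    then obtain v where "3 \<le> l" "\<forall>i<l. {v i, v (Suc i mod l)} \<in> ({} :: nat set set)"
      unfolding has_cycle_of_length_def by blast
    then show False by (metis empty_iff less_le_trans numeral_less_iff zero_less_numeral semiring_norm(76) zero_less_iff_neq_zero le_zero_eq)
  qed
  then have "girth {} = \<infinity>" by (simp add: girth_def top_enat_def)
  then have "0 \<in> S" unfolding S_def by (auto simp: simple_graph_def intro!: exI[of _ "{}"])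
  then have "ex N g \<in> S" unfolding ex_def S_def[symmetric] using fS by (intro Max_in) auto
  then show ?thesis by (auto simp: S_def)
qed

lemma girth_cycle: "enat g \<le> girth E \<Longrightarrow> has_cycle_of_length E l \<Longrightarrow> g \<le> l"
proof -
  assume a: "enat g \<le> girth E" "has_cycle_of_length E l"
  have "girth E \<le> enat l" unfolding girth_def by (rule INF_lower) (use a in simp)
  then show "g \<le> l" using a(1) by (metis enat_ord_simps(1) order_trans)
qed

lemma lower_N:
  fixes C c :: real
  assumes k1: "1 \<le> k" and Cp: "0 < C" and c1: "1 < c"
    and hyp: "C * real N powr c \<le> real (ex N (2 * k))"
    and N1: "1 \<le> N" and Cn: "C * real N powr c \<le> real n" and two: "2 \<le> C * real N powr (c - 1)"
    and n3: "3 \<le> n"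
  shows "(C * real N powr (c - 1) - 1) / real k \<le> alpha k n"
proof -
  define x where "x = C * real N powr c"
  define m where "m = nat \<lceil>x\<rceil>"
  have Np: "0 < real N" using N1 by simp
  have xN: "x = real N * (C * real N powr (c - 1))"
    using Np by (simp add: x_def powr_diff powr_one field_simps del: powr_realpow)
  have x0: "0 \<le> x" using Cp by (simp add: x_def)
  have mx: "x \<le> real m" unfolding m_def using x0 by linarith
  have mn: "m \<le> n" unfolding m_def using Cn x_def by (simp add: nat_le_iff ceiling_le_iff)
  have mex: "m \<le> ex N (2 * k)" unfolding m_def using hyp x_def by (simp add: nat_le_iff ceiling_le_iff)
  have mN: "N < m"
  proof -
    have "real N * 2 \<le> x" using xN two Np by (simp add: mult_left_mono)
    then show ?thesis using mx N1 by linarith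
  qed
  obtain E where E: "simple_graph N E" "enat (2 * k) \<le> girth E" "card E = ex N (2 * k)"
    using ex_attained by blast
  obtain E' where E': "E' \<subseteq> E" "card E' = m" using obtain_subset_with_card_n[OF mex[folded E(3)]] by blast
  note sp = simple_props[OF E(1)]
  have fE': "finite E'" using sp(1) E'(1) by (rule finite_subset[rotated])
  have two': "\<forall>e\<in>E'. card e = 2" using sp(2) E'(1) by blast
  have sub': "\<Union>E' \<subseteq> {0..<N}" using sp(3) E'(1) by blast
  have gir': "\<forall>l. has_cycle_of_length E' l \<longrightarrow> 2 * k \<le> l"
    using girth_cycle[OF E(2)] has_cycle_mono E'(1) by blast
  have "real (card E' - card {0..<N}) / (real k * real (card {0..<N})) \<le> alpha k n"
    by (rule main_bound[OF fE' two' gir' k1 sub' _ _ _ n3]) (use E'(2) mN mn in auto)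
  moreover have "real (card E' - card {0..<N}) = real m - real N" using E'(2) mN by simp
  ultimately have a: "(real m - real N) / (real k * real N) \<le> alpha k n" by simp
  have "(C * real N powr (c - 1) - 1) / real k = (x - real N) / (real k * real N)"
    using Np k1 xN by (simp add: field_simps)
  also have "\<dots> \<le> (real m - real N) / (real k * real N)"
    using mx Np k1 by (intro divide_right_mono) auto
  finally show ?thesis using a by linarith
qed

theorem theorem3p5:
  fixes k :: nat and c :: real
  assumes "3 \<le> k" and "c > 1"
    and "(\<lambda>n. real (ex n (2 * k))) \<in> \<Omega>(\<lambda>n. real n powr c)"
  shows "(\<lambda>n. alpha k n) \<in> \<Omega>(\<lambda>n. real n powr (1 - 1 / c))"
proof -
  have k1: "1 \<le> k" using assms(1) by simp
  have c1: "1 < c" by (fact assms(2))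
  from assms(3) obtain C where Cp: "C > 0"
    and ev: "eventually (\<lambda>N. C * norm (real N powr c) \<le> norm (real (ex N (2 * k)))) sequentially"
    unfolding bigomega_def by blast
  then obtain N0 where hypN0: "\<And>N. N \<ge> N0 \<Longrightarrow> C * real N powr c \<le> real (ex N (2 * k))"
    by (auto simp: eventually_sequentially)
  define M where "M = max N0 (max 1 (nat \<lceil>(2 / C) powr (1 / (c - 1))\<rceil>))"
  have Mprops: "N0 \<le> N \<and> 1 \<le> N \<and> 2 \<le> C * real N powr (c - 1)" if "M \<le> N" for N
  proof -
    have a: "N0 \<le> N" "1 \<le> N" using that by (auto simp: M_def)
    have "(2 / C) powr (1 / (c - 1)) \<le> real N"
    proof -
      have "nat \<lceil>(2 / C) powr (1 / (c - 1))\<rceil> \<le> N" using that by (simp add: M_def)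
      then show ?thesis by linarith
    qed
    then have "((2 / C) powr (1 / (c - 1))) powr (c - 1) \<le> real N powr (c - 1)"
      using c1 by (intro powr_mono2) auto
    moreover have "((2 / C) powr (1 / (c - 1))) powr (c - 1) = 2 / C"
      using c1 Cp by (simp add: powr_powr)
    ultimately have "2 / C \<le> real N powr (c - 1)" by simp
    then have "2 \<le> C * real N powr (c - 1)" using Cp by (simp add: divide_le_eq mult.commute)
    then show ?thesis using a by simp
  qed
  define B where "B = 2 * real M + 2"
  define y where "y n = (real n / C) powr (1 / c)" for n :: nat
  define c0 where "c0 = C / (2 * real k * (C powr (1 - 1 / c) * 2 powr (c - 1)))"
  have c0p: "0 < c0" using Cp k1 by (simp add: c0_def)
  have evn: "eventually (\<lambda>n. c0 * norm (real n powr (1 - 1 / c)) \<le> norm (alpha k n)) sequentially"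
    unfolding eventually_sequentially
  proof (intro exI[of _ "max 3 (nat \<lceil>C * B powr c\<rceil>)"] allI impI)
    fix n assume n: "max 3 (nat \<lceil>C * B powr c\<rceil>) \<le> n"
    have n3: "3 \<le> n" using n by simp
    have B0: "0 < B" by (simp add: B_def)
    have "C * B powr c \<le> real n" using n by linarith
    then have "B powr c \<le> real n / C" using Cp by (simp add: field_simps)
    then have "(B powr c) powr (1 / c) \<le> (real n / C) powr (1 / c)"
      using c1 B0 by (intro powr_mono2) auto
    then have yB: "B \<le> y n" using c1 B0 by (simp add: powr_powr y_def)
    define N where "N = nat \<lfloor>y n\<rfloor>"
    have y0: "0 \<le> y n" by (simp add: y_def)
    have Nle: "real N \<le> y n" using y0 by (simp add: N_def)
    have Nge: "y n - 1 \<le> real N" using y0 by (simp add: N_def)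
    have NM: "M \<le> N" using Nge yB by (simp add: B_def)
    note MP = Mprops[OF NM]
    have Cn: "C * real N powr c \<le> real n"
    proof -
      have "real N powr c \<le> y n powr c" using Nle c1 by (intro powr_mono2) auto
      also have "y n powr c = real n / C" using c1 Cp by (simp add: y_def powr_powr)
      finally show ?thesis using Cp by (simp add: field_simps)
    qed
    have A: "(C * real N powr (c - 1) - 1) / real k \<le> alpha k n"
      by (rule lower_N[OF k1 Cp c1 hypN0[OF conjunct1[OF MP]] _ Cn _ n3]) (use MP in auto)
    have half: "y n / 2 \<le> real N" using Nge yB B_def by linarith
    have "(y n / 2) powr (c - 1) \<le> real N powr (c - 1)"
      using half y0 c1 by (intro powr_mono2) auto
    moreover have "(y n / 2) powr (c - 1) = real n powr (1 - 1 / c) / (C powr (1 - 1 / c) * 2 powr (c - 1))"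
    proof -
      have "(y n / 2) powr (c - 1) = y n powr (c - 1) / 2 powr (c - 1)"
        using y0 by (simp add: powr_divide)
      also have "y n powr (c - 1) = (real n / C) powr (1 - 1 / c)"
        using c1 by (simp add: y_def powr_powr field_simps)
      also have "\<dots> = real n powr (1 - 1 / c) / C powr (1 - 1 / c)"
        using Cp by (simp add: powr_divide)
      finally show ?thesis by simp
    qed
    ultimately have P: "real n powr (1 - 1 / c) / (C powr (1 - 1 / c) * 2 powr (c - 1)) \<le> real N powr (c - 1)"
      by simp
    have "c0 * real n powr (1 - 1 / c) = (C / (2 * real k)) * (real n powr (1 - 1 / c) / (C powr (1 - 1 / c) * 2 powr (c - 1)))"
      by (simp add: c0_def field_simps)
    also have "\<dots> \<le> (C / (2 * real k)) * real N powr (c - 1)"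
      using P Cp k1 by (intro mult_left_mono) auto
    also have "\<dots> \<le> (C * real N powr (c - 1) - 1) / real k"
      using MP k1 by (simp add: field_simps)
    also have "\<dots> \<le> alpha k n" by (rule A)
    finally have "c0 * real n powr (1 - 1 / c) \<le> alpha k n" .
    then show "c0 * norm (real n powr (1 - 1 / c)) \<le> norm (alpha k n)" by simp
  qed
  show ?thesis unfolding bigomega_def using c0p evn by blast
qed


end
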